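(* Let $f\ge0$ with $f\in L_1(\mathbb{R})\cap L_2(\mathbb{R})$, let $n\ge2$ be an integer, and let $N$ be a Poisson process on $\mathbb{R}$ with intensity $nf$ with respect to Lebesgue measure. Let $1<\gamma_{\min}<\gamma$. Let $(u_n)_n$ be a sequence of positive numbers and $$\Lambda_u=\{\lambda\in\Gamma_n:\ \mathbb{P}(\eta_{\lambda,\gamma}\le|\beta_\lambda|+\eta_{\lambda,\gamma_{\min}})\le u_n\}.$$ Then $$\mathbb{E}\big(\|\tilde f^H_{n,\gamma}-f\|_2^2\big)\ge\Big(\sum_{\lambda\in\Lambda_u}\beta_\lambda^2\Big)\big(1-(3n^{-\gamma_{\min}}+u_n)\big).$$
   Context: Haar basis: $\phi=1_{[0,1]}$, $\psi=1_{[0,1/2]}-1_{(1/2,1]}$, $\phi_k(x)=\phi(x-k)$, $\psi_{j,k}(x)=2^{j/2}\psi(2^jx-k)$ ($j\ge0$, $k\in\mathbb{Z}$). $\Lambda=\{(j,k):j\ge-1,k\in\mathbb{Z}\}$; $\varphi_\lambda=\phi_k$ if $\lambda=(-1,k)$ and $\varphi_\lambda=\psi_{j,k}$ if $\lambda=(j,k)$, $j\ge0$; $\beta_\lambda=\int\varphi_\lambda f$. Define $\hat\beta_\lambda=\frac1n\sum_{T\in N}\varphi_\lambda(T)$, $\hat V_{\lambda,n}=\frac1{n^2}\sum_{T\in N}\varphi_\lambda^2(T)$, and for any parameter $g>0$, $$\tilde V^{(g)}_{\lambda,n}=\hat V_{\lambda,n}+\sqrt{2g\ln n\,\hat V_{\lambda,n}\frac{\|\varphi_\lambda\|_\infty^2}{n^2}}+3g\ln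 n\frac{\|\varphi_\lambda\|_\infty^2}{n^2},\qquad \eta_{\lambda,g}=\sqrt{2g\tilde V^{(g)}_{\lambda,n}\ln n}+\frac{g\ln n}{3n}\|\varphi_\lambda\|_\infty$$ (so $\eta_{\lambda,\gamma}$ and $\eta_{\lambda,\gamma_{\min}}$ are these thresholds with $g=\gamma$ and $g=\gamma_{\min}$ respectively). Let $j_0$ be the integer with $2^{j_0}\le n<2^{j_0+1}$ and $\Gamma_n=\{(j,k)\in\Lambda: j\le j_0\}$. The estimator is $\tilde f^H_{n,\gamma}=\sum_{\lambda\in\Gamma_n}\hat\beta_\lambda 1_{\{|\hat\beta_\lambda|\ge\eta_{\lambda,\gamma}\}}\varphi_\lambda$. *)

theory Defs
  imports "HOL-Probability.Probability" "HOL-Library.Multiset"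
begin

definition haar_phi :: "real \<Rightarrow> real" where
  "haar_phi x = indicator {0..1} x"

definition haar_psi :: "real \<Rightarrow> real" where
  "haar_psi x = indicator {0..1/2} x - indicator {1/2<..1} x"

definition Lambda_idx :: "(int \<times> int) set" where
  "Lambda_idx = {(j,k). j \<ge> -1}"

definition varphi :: "int \<times> int \<Rightarrow> real \<Rightarrow> real" where
  "varphi l x = (let (j,k) = l in
     if j = -1 then haar_phi (x - real_of_int k)
     else 2 powr (real_of_int j / 2) * haar_psi (2 powr real_of_int j * x - real_of_int k))"

definition sup_norm :: "(real \<Rightarrow> real) \<Rightarrow> real" where
  "sup_norm g = (SUP x. \<bar>g x\<bar>)"

definition beta :: "(real \<Rightarrow> real) \<Rightarrow> int \<times> int \<Rightarrow> real" where
  "beta f l = (LINT x|lborel. varphi l x * f x)"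

section \<open>Empirical quantities (a point configuration is a finite multiset of reals)\<close>

definition beta_hat :: "nat \<Rightarrow> real multiset \<Rightarrow> int \<times> int \<Rightarrow> real" where
  "beta_hat n X l = (1 / real n) * sum_mset (image_mset (varphi l) X)"

definition V_hat :: "nat \<Rightarrow> real multiset \<Rightarrow> int \<times> int \<Rightarrow> real" where
  "V_hat n X l = (1 / (real n)\<^sup>2) * sum_mset (image_mset (\<lambda>t. (varphi l t)\<^sup>2) X)"

definition V_tilde :: "real \<Rightarrow> nat \<Rightarrow> real multiset \<Rightarrow> int \<times> int \<Rightarrow> real" where
  "V_tilde g n X l = V_hat n X l
     + sqrt (2 * g * ln (real n) * V_hat n X l * (sup_norm (varphi l))\<^sup>2 / (real n)\<^sup>2)
     + 3 * g * ln (real n) * (sup_norm (varphi l))\<^sup>2 / (real n)\<^sup>2"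

definition eta :: "real \<Rightarrow> nat \<Rightarrow> real multiset \<Rightarrow> int \<times> int \<Rightarrow> real" where
  "eta g n X l = sqrt (2 * g * V_tilde g n X l * ln (real n))
     + g * ln (real n) / (3 * real n) * sup_norm (varphi l)"

definition j0 :: "nat \<Rightarrow> int" where
  "j0 n = (THE j::int. 2 powr real_of_int j \<le> real n \<and> real n < 2 powr real_of_int (j + 1))"

definition Gamma_n :: "nat \<Rightarrow> (int \<times> int) set" where
  "Gamma_n n = {(j,k) \<in> Lambda_idx. j \<le> j0 n}"

text \<open>The hard-thresholding estimator (pointwise; for fixed x only finitely many terms are nonzero).\<close>
definition f_tilde_H :: "nat \<Rightarrow> real \<Rightarrow> real multiset \<Rightarrow> real \<Rightarrow> real" where
  "f_tilde_H n \<gamma> X x =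
     (\<Sum>\<^sub>\<infinity>l\<in>Gamma_n n. beta_hat n X l
        * (if \<bar>beta_hat n X l\<bar> \<ge> eta \<gamma> n X l then 1 else 0) * varphi l x)"

definition count_in :: "real set \<Rightarrow> real multiset \<Rightarrow> nat" where
  "count_in A X = size (filter_mset (\<lambda>t. t \<in> A) X)"

definition poisson_process :: "'a measure \<Rightarrow> ('a \<Rightarrow> real multiset) \<Rightarrow> real measure \<Rightarrow> bool" where
  "poisson_process M N \<nu> \<longleftrightarrow>
     prob_space M \<and> sets \<nu> = sets borel \<and> emeasure \<nu> UNIV < \<infinity> \<and>
     (\<forall>A \<in> sets borel. (\<lambda>\<omega>. count_in A (N \<omega>)) \<in> measurable M (count_space UNIV)) \<and>
     (\<forall>A \<in> sets borel. \<forall>k::nat.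
        measure M {\<omega> \<in> space M. count_in A (N \<omega>) = k}
          = exp (- measure \<nu> A) * (measure \<nu> A) ^ k / fact k) \<and>
     (\<forall>(I::nat set) A. A ` I \<subseteq> sets borel \<longrightarrow> disjoint_family_on A I \<longrightarrow>
        prob_space.indep_vars M (\<lambda>_. count_space UNIV) (\<lambda>i \<omega>. count_in (A i) (N \<omega>)) I)"

end

theory Submission
  imports Defs
begin

lemma fact_ge_pow3: "2 * 3 ^ k \<le> (fact (k + 2) :: real)"
proof (induction k)
  case 0 then show ?case by simp
next
  case (Suc k)
  have e: "fact (Suc k + 2) = real (k + 3) * (fact (k + 2) :: real)"
    by (simp add: fact_Suc algebra_simps)
  have i: "real (k+3) * fact (k + 2) \<ge> 3 * (2 * 3 ^ k)"
    using Suc by (intro mult_mono) auto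
  show ?case using e i by (simp only: power_Suc)
qed

lemma exp_phi_bound:
  fixes \<theta> :: real assumes "\<bar>\<theta>\<bar> < 3"
  shows "exp \<theta> - 1 - \<theta> \<le> \<theta>\<^sup>2 / (2 * (1 - \<bar>\<theta>\<bar> / 3))"
proof -
  have e: "(\<lambda>k. \<theta> ^ k / fact k) sums exp \<theta>"
    using exp_converges[of \<theta>] by (simp add: divide_inverse mult.commute)
  have s1: "(\<lambda>k. \<theta> ^ (k+2) / fact (k+2)) sums (exp \<theta> - 1 - \<theta>)"
  proof -
    have "(\<lambda>k. \<theta> ^ (Suc k) / fact (Suc k)) sums (exp \<theta> - 1)"
      using e sums_Suc_iff[of "\<lambda>k. \<theta> ^ k / fact k" "exp \<theta> - 1"] by simp
    then have "(\<lambda>k. \<theta> ^ (Suc (Suc k)) / fact (Suc (Suc k))) sums (exp \<theta> - 1 - \<theta>)"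
      using sums_Suc_iff[of "\<lambda>k. \<theta> ^ (Suc k) / fact (Suc k)" "exp \<theta> - 1 - \<theta>"] by simp
    then show ?thesis by (simp add: numeral_2_eq_2)
  qed
  have q: "\<bar>\<bar>\<theta>\<bar> / 3\<bar> < 1" using assms by auto
  have s2: "(\<lambda>k. \<theta>\<^sup>2 / 2 * (\<bar>\<theta>\<bar> / 3) ^ k) sums (\<theta>\<^sup>2 / 2 * (1 / (1 - \<bar>\<theta>\<bar> / 3)))"
    using sums_mult[OF geometric_sums[of "\<bar>\<theta>\<bar> / 3"], of "\<theta>\<^sup>2 / 2"] q by simp
  have le: "\<theta> ^ (k+2) / fact (k+2) \<le> \<theta>\<^sup>2 / 2 * (\<bar>\<theta>\<bar> / 3) ^ k" for k
  proof -
    have "\<theta> ^ (k+2) / fact (k+2) \<le> \<bar>\<theta>\<bar> ^ (k+2) / fact (k+2)"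
      using abs_ge_self[of "\<theta>^(k+2)"] unfolding power_abs by (intro divide_right_mono) auto
    also have "\<dots> \<le> \<bar>\<theta>\<bar> ^ (k+2) / (2 * 3 ^ k)"
      by (intro divide_left_mono fact_ge_pow3) auto
    also have "\<dots> = \<theta>\<^sup>2 / 2 * (\<bar>\<theta>\<bar> / 3) ^ k"
      by (simp add: power_add power_divide power2_eq_square)
    finally show ?thesis .
  qed
  have "exp \<theta> - 1 - \<theta> \<le> \<theta>\<^sup>2 / 2 * (1 / (1 - \<bar>\<theta>\<bar> / 3))"
    by (rule sums_le[OF _ s1 s2]) (use le in auto)
  then show ?thesis by simp
qed

lemma nn_integral_nat_var:
  assumes P: "prob_space M" and Z: "Z \<in> measurable M (count_space UNIV)"
  shows "(\<integral>\<^sup>+\<omega>. g (Z \<omega>) \<partial>M) = (\<Sum>k. g k * emeasure M {\<omega>\<in>space M. Z \<omega> = (k::nat)})"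
proof -
  have "(\<integral>\<^sup>+\<omega>. g (Z \<omega>) \<partial>M) = (\<integral>\<^sup>+\<omega>. (\<Sum>k. g k * indicator {\<omega>\<in>space M. Z \<omega> = k} \<omega>) \<partial>M)"
  proof (rule nn_integral_cong)
    fix \<omega> assume "\<omega> \<in> space M"
    then have "(\<lambda>k. g k * indicator {\<omega>\<in>space M. Z \<omega> = k} \<omega>) = (\<lambda>k. if k = Z \<omega> then g k else 0)"
      by (auto simp: indicator_def)
    then show "g (Z \<omega>) = (\<Sum>k. g k * indicator {\<omega>\<in>space M. Z \<omega> = k} \<omega>)"
      using sums_unique[OF sums_single[of "Z \<omega>" g]] by simp
  qed
  also have "\<dots> = (\<Sum>k. \<integral>\<^sup>+\<omega>. g k * indicator {\<omega>\<in>space M. Z \<omega> = k} \<omega> \<partial>M)"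
    by (rule nn_integral_suminf) (use Z in measurable)
  also have "\<dots> = (\<Sum>k. g k * emeasure M {\<omega>\<in>space M. Z \<omega> = k})"
    by (intro suminf_cong nn_integral_cmult_indicator) (use Z in measurable)
  finally show ?thesis .
qed

lemma poisson_mgf:
  assumes P: "prob_space M" and Z: "Z \<in> measurable M (count_space UNIV)"
    and dist: "\<And>k. measure M {\<omega>\<in>space M. Z \<omega> = k} = exp (- \<mu>) * \<mu> ^ k / fact k"
    and mu: "\<mu> \<ge> 0"
  shows "(\<integral>\<^sup>+\<omega>. ennreal (exp (s * real (Z \<omega>))) \<partial>M) = ennreal (exp (\<mu> * (exp s - 1)))"
proof -
  interpret prob_space M by fact
  have em: "emeasure M {\<omega>\<in>space M. Z \<omega> = k} = ennreal (exp (- \<mu>) * \<mu> ^ k / fact k)" for k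
    using dist[of k] by (simp add: emeasure_eq_measure)
  have ser: "(\<lambda>k. exp (s * real k) * (exp (- \<mu>) * \<mu> ^ k / fact k)) sums (exp (- \<mu>) * exp (\<mu> * exp s))"
  proof -
    have "(\<lambda>k. (\<mu> * exp s) ^ k / fact k) sums exp (\<mu> * exp s)"
      using exp_converges[of "\<mu> * exp s"] by (simp add: divide_inverse mult.commute)
    from sums_mult[OF this, of "exp (- \<mu>)"] show ?thesis
      by (simp add: power_mult_distrib exp_of_nat_mult[symmetric] mult.commute mult.left_commute)
  qed
  have "(\<integral>\<^sup>+\<omega>. ennreal (exp (s * real (Z \<omega>))) \<partial>M)
      = (\<Sum>k. ennreal (exp (s * real k)) * emeasure M {\<omega>\<in>space M. Z \<omega> = k})"
    by (rule nn_integral_nat_var[OF P Z])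
  also have "\<dots> = (\<Sum>k. ennreal (exp (s * real k) * (exp (- \<mu>) * \<mu> ^ k / fact k)))"
    using mu by (intro suminf_cong, subst em, subst ennreal_mult[symmetric]) auto
  also have "\<dots> = ennreal (exp (- \<mu>) * exp (\<mu> * exp s))"
  proof -
    have "(\<Sum>k. ennreal (exp (s * real k) * (exp (- \<mu>) * \<mu> ^ k / fact k)))
       = ennreal (\<Sum>k. exp (s * real k) * (exp (- \<mu>) * \<mu> ^ k / fact k))"
      by (rule suminf_ennreal2) (use mu ser in \<open>auto simp: sums_iff\<close>)
    then show ?thesis using ser by (simp add: sums_iff)
  qed
  also have "exp (- \<mu>) * exp (\<mu> * exp s) = exp (\<mu> * (exp s - 1))"
    by (simp add: exp_add[symmetric] algebra_simps)
  finally show ?thesis .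
qed

lemma chernoff2:
  fixes Z :: "nat \<Rightarrow> 'a \<Rightarrow> nat" and \<mu> :: "nat \<Rightarrow> real"
  assumes P: "prob_space M"
  and Zm: "\<And>i. Z i \<in> measurable M (count_space UNIV)"
  and ind: "prob_space.indep_vars M (\<lambda>_. count_space UNIV) Z {0,1}"
  and dist: "\<And>i k. measure M {\<omega>\<in>space M. Z i \<omega> = k} = exp (- \<mu> i) * \<mu> i ^ k / fact k"
  and mu: "\<And>i. \<mu> i \<ge> 0"
  and th: "\<theta> \<ge> 0"
  shows "measure M {\<omega>\<in>space M. t \<le> c0 * real (Z 0 \<omega>) + c1 * real (Z 1 \<omega>)}
          \<le> exp (- \<theta> * t + \<mu> 0 * (exp (\<theta> * c0) - 1) + \<mu> 1 * (exp (\<theta> * c1) - 1))"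
proof -
  interpret prob_space M by fact
  define c where "c = (\<lambda>i::nat. if i = 0 then c0 else c1)"
  define S where "S = {\<omega>\<in>space M. t \<le> c0 * real (Z 0 \<omega>) + c1 * real (Z 1 \<omega>)}"
  define X where "X = (\<lambda>i \<omega>. ennreal (exp (\<theta> * c i * real (Z i \<omega>))))"
  have Zm': "(\<lambda>\<omega>. real (Z i \<omega>)) \<in> borel_measurable M" for i
    using Zm[of i] by (rule measurable_compose) simp
  have Sm: "S \<in> sets M" unfolding S_def using Zm' by measurable
  have "emeasure M S = (\<integral>\<^sup>+\<omega>. indicator S \<omega> \<partial>M)" using Sm by simp
  also have "\<dots> \<le> (\<integral>\<^sup>+\<omega>. ennreal (exp (- \<theta> * t)) * (\<Prod>i\<in>{0,1}. X i \<omega>) \<partial>M)"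
  proof (rule nn_integral_mono)
    fix \<omega> assume "\<omega> \<in> space M"
    have eq: "ennreal (exp (- \<theta> * t)) * (\<Prod>i\<in>{0,1}. X i \<omega>)
        = ennreal (exp (\<theta> * (c0 * real (Z 0 \<omega>) + c1 * real (Z 1 \<omega>) - t)))"
      by (simp add: X_def c_def ennreal_mult[symmetric] exp_add[symmetric] algebra_simps)
    show "indicator S \<omega> \<le> ennreal (exp (- \<theta> * t)) * (\<Prod>i\<in>{0,1}. X i \<omega>)"
    proof (cases "\<omega> \<in> S")
      case True
      then have "0 \<le> \<theta> * (c0 * real (Z 0 \<omega>) + c1 * real (Z 1 \<omega>) - t)"
        using th by (auto simp: S_def)
      then show ?thesis unfolding eq using True by (simp add: indicator_def)
    qed (simp add: indicator_def)
  qed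
  also have "\<dots> = ennreal (exp (- \<theta> * t)) * (\<integral>\<^sup>+\<omega>. (\<Prod>i\<in>{0,1}. X i \<omega>) \<partial>M)"
    by (rule nn_integral_cmult) (unfold X_def, use Zm' in measurable)
  also have "(\<integral>\<^sup>+\<omega>. (\<Prod>i\<in>{0,1}. X i \<omega>) \<partial>M) = (\<Prod>i\<in>{0,1}. \<integral>\<^sup>+\<omega>. X i \<omega> \<partial>M)"
  proof (rule indep_vars_nn_integral)
    show "indep_vars (\<lambda>_. borel) X {0,1}"
      unfolding X_def
      by (rule indep_vars_compose2[OF ind, where Y="\<lambda>i k. ennreal (exp (\<theta> * c i * real k))"]) simp
  qed (auto simp: X_def)
  also have "(\<Prod>i\<in>{0,1}. \<integral>\<^sup>+\<omega>. X i \<omega> \<partial>M) = (\<Prod>i\<in>{0::nat,1}. ennreal (exp (\<mu> i * (exp (\<theta> * c i) - 1))))"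
    unfolding X_def by (intro prod.cong refl poisson_mgf[OF P Zm dist mu])
  also have "ennreal (exp (- \<theta> * t)) * \<dots> = ennreal (exp (- \<theta> * t + \<mu> 0 * (exp (\<theta> * c0) - 1) + \<mu> 1 * (exp (\<theta> * c1) - 1)))"
    by (simp add: c_def ennreal_mult[symmetric] exp_add[symmetric])
  finally have "emeasure M S \<le> ennreal (exp (- \<theta> * t + \<mu> 0 * (exp (\<theta> * c0) - 1) + \<mu> 1 * (exp (\<theta> * c1) - 1)))" .
  then show ?thesis unfolding S_def[symmetric] by (simp add: emeasure_eq_measure)
qed

lemma theta_choice:
  fixes v x w :: real
  assumes v: "v > 0" and x: "x \<ge> 0" and w: "w = sqrt (2 * v * x)"
  defines "\<theta> \<equiv> 3 * w / (3 * v + w)"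
  shows "0 \<le> \<theta>" "\<theta> < 3" "- \<theta> * (w + x / 3) + v * (\<theta>\<^sup>2 / (2 * (1 - \<theta> / 3))) = - x"
proof -
  have vx: "0 \<le> 2 * v * x" using v x by simp
  then have w0: "w \<ge> 0" using w by simp
  from vx have w2: "w\<^sup>2 = 2 * v * x" using w by simp
  have d: "3 * v + w > 0" using v w0 by linarith
  show "0 \<le> \<theta>" unfolding \<theta>_def using w0 d by simp
  show "\<theta> < 3" unfolding \<theta>_def using w0 d v by (simp add: field_simps)
  have one: "1 - \<theta> / 3 = 3 * v / (3 * v + w)" unfolding \<theta>_def using d by (simp add: field_simps)
  have t2: "\<theta>\<^sup>2 = 9 * w\<^sup>2 / (3 * v + w)\<^sup>2" unfolding \<theta>_def by (simp add: power_divide power_mult_distrib)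
  have "v * (\<theta>\<^sup>2 / (2 * (1 - \<theta> / 3))) = v * (9 * w\<^sup>2 / (3 * v + w)\<^sup>2) / (2 * (3 * v / (3 * v + w)))"
    unfolding one t2 by simp
  also have "\<dots> = 3 * w\<^sup>2 / (2 * (3 * v + w))"
    using d v by (simp add: divide_simps power2_eq_square)
  also have "\<dots> = 3 * v * x / (3 * v + w)" using w2 d by (simp add: divide_simps)
  finally have a: "v * (\<theta>\<^sup>2 / (2 * (1 - \<theta> / 3))) = 3 * v * x / (3 * v + w)" .
  have "\<theta> * (w + x / 3) = (3 * w\<^sup>2 + w * x) / (3 * v + w)"
    unfolding \<theta>_def using d by (simp add: field_simps power2_eq_square)
  also have "\<dots> = (6 * v * x + w * x) / (3 * v + w)" using w2 by simp
  finally have b: "\<theta> * (w + x / 3) = (6 * v * x + w * x) / (3 * v + w)" .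
  show "- \<theta> * (w + x / 3) + v * (\<theta>\<^sup>2 / (2 * (1 - \<theta> / 3))) = - x"
  proof -
    have e: "3 * v * x - (6 * v * x + w * x) = - x * (3 * v + w)" by (simp add: algebra_simps)
    have "- ((6 * v * x + w * x) / (3 * v + w)) + 3 * v * x / (3 * v + w)
        = (3 * v * x - (6 * v * x + w * x)) / (3 * v + w)" by (simp only: diff_divide_distrib)
    also have "\<dots> = - x" unfolding e using d by simp
    finally have "- ((6 * v * x + w * x) / (3 * v + w)) + 3 * v * x / (3 * v + w) = - x" .
    then show ?thesis unfolding mult_minus_left a b .
  qed
qed



lemma tail_one:
  fixes Z :: "nat \<Rightarrow> 'a \<Rightarrow> nat" and \<mu> :: "nat \<Rightarrow> real"
  assumes P: "prob_space M"
  and Zm: "\<And>i. Z i \<in> measurable M (count_space UNIV)"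
  and ind: "prob_space.indep_vars M (\<lambda>_. count_space UNIV) Z {0,1}"
  and dist: "\<And>i k. measure M {\<omega>\<in>space M. Z i \<omega> = k} = exp (- \<mu> i) * \<mu> i ^ k / fact k"
  and mu: "\<And>i. \<mu> i \<ge> 0"
  and c0: "\<bar>c0\<bar> = 1" and c1: "\<bar>c1\<bar> = 1" and x: "x \<ge> 0"
  shows "measure M {\<omega>\<in>space M. sqrt (2 * (\<mu> 0 + \<mu> 1) * x) + x / 3
            \<le> c0 * (real (Z 0 \<omega>) - \<mu> 0) + c1 * (real (Z 1 \<omega>) - \<mu> 1)} \<le> exp (- x)"
proof -
  define v where "v = \<mu> 0 + \<mu> 1"
  define w where "w = sqrt (2 * v * x)"
  define t where "t = w + x / 3"
  have set_eq: "{\<omega>\<in>space M. sqrt (2 * (\<mu> 0 + \<mu> 1) * x) + x / 3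
            \<le> c0 * (real (Z 0 \<omega>) - \<mu> 0) + c1 * (real (Z 1 \<omega>) - \<mu> 1)}
       = {\<omega>\<in>space M. t + c0 * \<mu> 0 + c1 * \<mu> 1 \<le> c0 * real (Z 0 \<omega>) + c1 * real (Z 1 \<omega>)}"
    unfolding t_def w_def v_def right_diff_distrib by (intro Collect_cong conj_cong refl) (rule iffI; linarith)
  have gen: "measure M {\<omega>\<in>space M. t + c0 * \<mu> 0 + c1 * \<mu> 1 \<le> c0 * real (Z 0 \<omega>) + c1 * real (Z 1 \<omega>)}
      \<le> exp (- \<theta> * t + \<mu> 0 * (exp (\<theta> * c0) - 1 - \<theta> * c0) + \<mu> 1 * (exp (\<theta> * c1) - 1 - \<theta> * c1))"
    if "\<theta> \<ge> 0" for \<theta>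
  proof -
    have "- \<theta> * (t + c0 * \<mu> 0 + c1 * \<mu> 1) + \<mu> 0 * (exp (\<theta> * c0) - 1) + \<mu> 1 * (exp (\<theta> * c1) - 1)
      = - \<theta> * t + \<mu> 0 * (exp (\<theta> * c0) - 1 - \<theta> * c0) + \<mu> 1 * (exp (\<theta> * c1) - 1 - \<theta> * c1)"
      by (simp add: algebra_simps)
    then show ?thesis using chernoff2[OF P Zm ind dist mu that, of "t + c0 * \<mu> 0 + c1 * \<mu> 1" c0 c1]
      by simp
  qed
  show ?thesis
  proof (cases "v = 0")
    case True
    then have m0: "\<mu> 0 = 0" "\<mu> 1 = 0" using mu[of 0] mu[of 1] by (auto simp: v_def)
    have tx: "t = x / 3" using True by (simp add: t_def w_def)
    show ?thesis using gen[of 3] m0 unfolding set_eq by (simp add: tx)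
  next
    case False
    then have vp: "v > 0" using mu[of 0] mu[of 1] by (auto simp: v_def)
    define \<theta> where "\<theta> = 3 * w / (3 * v + w)"
    note th = theta_choice[OF vp x w_def, folded \<theta>_def]
    have ab: "\<bar>\<theta> * c0\<bar> = \<theta>" "\<bar>\<theta> * c1\<bar> = \<theta>" using th(1) c0 c1 by (auto simp: abs_mult)
    have sq: "(\<theta> * c0)\<^sup>2 = \<theta>\<^sup>2" "(\<theta> * c1)\<^sup>2 = \<theta>\<^sup>2"
      using ab by (metis power2_abs)+
    have e0: "exp (\<theta> * c0) - 1 - \<theta> * c0 \<le> \<theta>\<^sup>2 / (2 * (1 - \<theta> / 3))"
      using exp_phi_bound[of "\<theta> * c0"] th(2) unfolding ab sq by simp
    have e1: "exp (\<theta> * c1) - 1 - \<theta> * c1 \<le> \<theta>\<^sup>2 / (2 * (1 - \<theta> / 3))"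
      using exp_phi_bound[of "\<theta> * c1"] th(2) unfolding ab sq by simp
    have "\<mu> 0 * (exp (\<theta> * c0) - 1 - \<theta> * c0) + \<mu> 1 * (exp (\<theta> * c1) - 1 - \<theta> * c1)
        \<le> \<mu> 0 * (\<theta>\<^sup>2 / (2 * (1 - \<theta> / 3))) + \<mu> 1 * (\<theta>\<^sup>2 / (2 * (1 - \<theta> / 3)))"
      using e0 e1 mu[of 0] mu[of 1] by (intro add_mono mult_left_mono) auto
    also have "\<dots> = v * (\<theta>\<^sup>2 / (2 * (1 - \<theta> / 3)))" unfolding v_def by (simp only: distrib_right)
    finally have "- \<theta> * t + \<mu> 0 * (exp (\<theta> * c0) - 1 - \<theta> * c0) + \<mu> 1 * (exp (\<theta> * c1) - 1 - \<theta> * c1) \<le> - x"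
      using th(3) unfolding t_def by linarith
    then show ?thesis unfolding set_eq using gen[OF th(1)] by (meson exp_le_cancel_iff order_trans)
  qed
qed

lemma det_ineq:
  fixes v x S :: real
  assumes v: "v \<ge> 0" and x: "x \<ge> 0" and S: "S \<ge> 0"
    and h: "v - sqrt (2 * v * x) - x / 3 < S"
  shows "v \<le> S + sqrt (2 * x * S) + 3 * x"
proof -
  define w where "w = sqrt v"
  define a where "a = sqrt (2 * x)"
  define r where "r = sqrt S"
  have w0: "w \<ge> 0" and a0: "a \<ge> 0" and r0: "r \<ge> 0" using v x S by (auto simp: w_def a_def r_def)
  have vw: "v = w * w" using v by (simp add: w_def)
  have xa: "2 * x = a * a" using x by (simp add: a_def)
  have Sr: "S = r * r" using S by (simp add: r_def)
  have s1: "sqrt (2 * v * x) = w * a" using v x S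
    by (simp add: w_def a_def real_sqrt_mult[symmetric] mult.assoc)
  have s2: "sqrt (2 * x * S) = a * r" using v x S
    by (simp add: r_def a_def real_sqrt_mult[symmetric])
  have h': "w * w - w * a - a * a / 6 < r * r" using h vw xa Sr s1 by linarith
  have ar: "a * r \<ge> 0" using a0 r0 by simp
  have goal: "w * w \<le> r * r + a * r + 3 * (a * a) / 2"
  proof (cases "w \<le> 4 * a / 3")
    case True
    have "w * a \<le> 4 * a / 3 * a" using True a0 by (rule mult_right_mono)
    then have "w * a \<le> 4 / 3 * (a * a)" by simp
    then show ?thesis using h' ar by linarith
  next
    case False
    have "w * a \<ge> 4 * a / 3 * a" using False a0 by (intro mult_right_mono) auto
    then have wa: "w * a \<ge> 4 / 3 * (a * a)" by simp
    have sq: "(w - 4 * a / 3) * (w - 4 * a / 3) = w * w - 8 / 3 * (w * a) + 16 / 9 * (a * a)"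
      by (simp add: algebra_simps)
    have "(w - 4 * a / 3) * (w - 4 * a / 3) < r * r" using sq wa h' a0 zero_le_square[of a] by linarith
    then have lt: "w - 4 * a / 3 < r"
    proof (rule contrapos_pp)
      assume "\<not> w - 4 * a / 3 < r"
      then have "r \<le> w - 4 * a / 3" by simp
      then have "r * r \<le> (w - 4 * a / 3) * (w - 4 * a / 3)" using r0 by (intro mult_mono) auto
      then show "\<not> (w - 4 * a / 3) * (w - 4 * a / 3) < r * r" by simp
    qed
    have "a * (w - 4 * a / 3) \<le> a * r" using a0 lt by (intro mult_left_mono) auto
    then have "a * w - 4 / 3 * (a * a) \<le> a * r" by (simp add: algebra_simps)
    then show ?thesis using h' by (simp add: mult.commute)
  qed
  show ?thesis using goal vw xa Sr s2 by linarith
qed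
lemma dev_bound:
  fixes Z :: "nat \<Rightarrow> 'a \<Rightarrow> nat" and \<mu> :: "nat \<Rightarrow> real"
  assumes P: "prob_space M"
  and Zm: "\<And>i. Z i \<in> measurable M (count_space UNIV)"
  and ind: "prob_space.indep_vars M (\<lambda>_. count_space UNIV) Z {0,1}"
  and dist: "\<And>i k. measure M {\<omega>\<in>space M. Z i \<omega> = k} = exp (- \<mu> i) * \<mu> i ^ k / fact k"
  and mu: "\<And>i. \<mu> i \<ge> 0"
  and x: "x \<ge> 0"
  shows "measure M {\<omega>\<in>space M.
     sqrt (2 * x * ((real (Z 0 \<omega>) + real (Z 1 \<omega>)) + sqrt (2 * x * (real (Z 0 \<omega>) + real (Z 1 \<omega>))) + 3 * x)) + x / 3
       \<le> \<bar>(real (Z 0 \<omega>) - real (Z 1 \<omega>)) - (\<mu> 0 - \<mu> 1)\<bar>} \<le> 3 * exp (- x)"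
proof -
  interpret prob_space M by fact
  define v where "v = \<mu> 0 + \<mu> 1"
  define T where "T c0 c1 = {\<omega>\<in>space M. sqrt (2 * (\<mu> 0 + \<mu> 1) * x) + x / 3
            \<le> c0 * (real (Z 0 \<omega>) - \<mu> 0) + c1 * (real (Z 1 \<omega>) - \<mu> 1)}" for c0 c1 :: real
  have Zm': "(\<lambda>\<omega>. real (Z i \<omega>)) \<in> borel_measurable M" for i
    using Zm[of i] by (rule measurable_compose) simp
  have Tm: "T c0 c1 \<in> sets M" for c0 c1 unfolding T_def using Zm' by measurable
  have Tb: "measure M (T c0 c1) \<le> exp (- x)" if "\<bar>c0\<bar> = 1" "\<bar>c1\<bar> = 1" for c0 c1
    unfolding T_def by (rule tail_one[OF P Zm ind dist mu that x])
  define A where "A = {\<omega>\<in>space M.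
     sqrt (2 * x * ((real (Z 0 \<omega>) + real (Z 1 \<omega>)) + sqrt (2 * x * (real (Z 0 \<omega>) + real (Z 1 \<omega>))) + 3 * x)) + x / 3
       \<le> \<bar>(real (Z 0 \<omega>) - real (Z 1 \<omega>)) - (\<mu> 0 - \<mu> 1)\<bar>}"
  have sub: "A \<subseteq> (T 1 (-1) \<union> T (-1) 1) \<union> T (-1) (-1)"
  proof
    fix \<omega> assume \<omega>: "\<omega> \<in> A"
    define S where "S = real (Z 0 \<omega>) + real (Z 1 \<omega>)"
    define D where "D = (real (Z 0 \<omega>) - real (Z 1 \<omega>)) - (\<mu> 0 - \<mu> 1)"
    have sp: "\<omega> \<in> space M" and hA: "sqrt (2 * x * (S + sqrt (2 * x * S) + 3 * x)) + x / 3 \<le> \<bar>D\<bar>"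
      using \<omega> by (auto simp: A_def S_def D_def)
    show "\<omega> \<in> (T 1 (-1) \<union> T (-1) 1) \<union> T (-1) (-1)"
    proof (cases "\<omega> \<in> T (-1) (-1)")
      case False
      then have "\<not> sqrt (2 * v * x) + x / 3 \<le> - 1 * (real (Z 0 \<omega>) - \<mu> 0) + - 1 * (real (Z 1 \<omega>) - \<mu> 1)"
        using sp by (simp add: T_def v_def)
      then have "v - sqrt (2 * v * x) - x / 3 < S" by (simp add: S_def v_def)
      then have hv: "v \<le> S + sqrt (2 * x * S) + 3 * x"
        using det_ineq[of v x S] mu[of 0] mu[of 1] x by (simp add: v_def S_def)
      have m: "x * v \<le> x * (S + sqrt (2 * x * S) + 3 * x)" using hv x by (rule mult_left_mono)
      have "2 * v * x \<le> 2 * x * (S + sqrt (2 * x * S) + 3 * x)" using m by (simp add: mult.commute)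
      then have "sqrt (2 * v * x) \<le> sqrt (2 * x * (S + sqrt (2 * x * S) + 3 * x))" by (rule real_sqrt_le_mono)
      then have "sqrt (2 * v * x) + x / 3 \<le> \<bar>D\<bar>" using hA by linarith
      then have "\<omega> \<in> T 1 (-1) \<or> \<omega> \<in> T (-1) 1"
        using sp by (cases "D \<ge> 0") (auto simp: T_def D_def v_def algebra_simps)
      then show ?thesis by blast
    qed simp
  qed
  have "measure M A \<le> measure M ((T 1 (-1) \<union> T (-1) 1) \<union> T (-1) (-1))"
    using sub Tm by (intro finite_measure_mono) auto
  also have "\<dots> \<le> measure M (T 1 (-1) \<union> T (-1) 1) + measure M (T (-1) (-1))"
    using Tm by (intro measure_Un_le) auto
  also have "\<dots> \<le> (measure M (T 1 (-1)) + measure M (T (-1) 1)) + measure M (T (-1) (-1))"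
    using Tm by (intro add_mono measure_Un_le) auto
  also have "\<dots> \<le> (exp (- x) + exp (- x)) + exp (- x)"
    by (intro add_mono Tb) auto
  finally show ?thesis unfolding A_def by simp
qed

definition scl :: "int \<times> int \<Rightarrow> real" where
  "scl l = (if fst l = -1 then 1 else 2 powr real_of_int (fst l))"
definition amp :: "int \<times> int \<Rightarrow> real" where
  "amp l = (if fst l = -1 then 1 else 2 powr (real_of_int (fst l) / 2))"
definition lo :: "int \<times> int \<Rightarrow> real" where
  "lo l = real_of_int (snd l) / scl l"
definition mid :: "int \<times> int \<Rightarrow> real" where
  "mid l = (if fst l = -1 then real_of_int (snd l) + 1 else (real_of_int (snd l) + 1/2) / scl l)"
definition hi :: "int \<times> int \<Rightarrow> real" where
  "hi l = (real_of_int (snd l) + 1) / scl l"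
definition PP :: "int \<times> int \<Rightarrow> real set" where "PP l = {lo l..mid l}"
definition QQ :: "int \<times> int \<Rightarrow> real set" where "QQ l = {mid l<..hi l}"

lemma scl_pos: "scl l > 0" by (simp add: scl_def)
lemma amp_pos: "amp l > 0" by (simp add: amp_def)

lemma lo_mid: "lo l \<le> mid l" and mid_hi: "mid l \<le> hi l"
  using scl_pos[of l] by (auto simp: lo_def mid_def hi_def scl_def divide_right_mono)

lemma PQ_disj: "PP l \<inter> QQ l = {}" by (auto simp: PP_def QQ_def)

lemma varphi_eq: "varphi l x = amp l * (indicator (PP l) x - indicator (QQ l) x)"
proof (cases l)
  case (Pair j k)
  show ?thesis
  proof (cases "j = -1")
    case True
    then show ?thesis using Pair
      by (auto simp: varphi_def haar_phi_def amp_def PP_def QQ_def lo_def mid_def hi_def scl_def indicator_def)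
  next
    case False
    define s where "s = 2 powr real_of_int j"
    have s: "s > 0" by (simp add: s_def)
    have i1: "(0 \<le> s * x - k \<and> s * x - k \<le> 1/2) \<longleftrightarrow> (k / s \<le> x \<and> x \<le> (k + 1/2) / s)"
      using s by (auto simp: field_simps)
    have i2: "(1/2 < s * x - k \<and> s * x - k \<le> 1) \<longleftrightarrow> ((k + 1/2) / s < x \<and> x \<le> (k + 1) / s)"
      using s by (auto simp: field_simps)
    show ?thesis using Pair False i1 i2
      by (simp add: varphi_def haar_psi_def amp_def PP_def QQ_def lo_def mid_def hi_def scl_def
          indicator_def s_def[symmetric] mult.commute)
  qed
qed

lemma abs_varphi_le: "\<bar>varphi l x\<bar> \<le> amp l"
  using amp_pos[of l] PQ_disj[of l] by (auto simp: varphi_eq indicator_def abs_mult)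

lemma varphi_lo: "varphi l (lo l) = amp l"
  using lo_mid[of l] by (simp add: varphi_eq PP_def QQ_def indicator_def)

lemma sup_norm_varphi: "sup_norm (varphi l) = amp l"
  unfolding sup_norm_def
proof (rule cSup_eq_maximum)
  show "amp l \<in> range (\<lambda>x. \<bar>varphi l x\<bar>)"
    using varphi_lo[of l] amp_pos[of l] by (metis abs_of_pos rangeI)
  fix y assume "y \<in> range (\<lambda>x. \<bar>varphi l x\<bar>)"
  then show "y \<le> amp l" using abs_varphi_le[of l] by auto
qed

lemma varphi_sq: "(varphi l x)\<^sup>2 = (amp l)\<^sup>2 * (indicator (PP l) x + indicator (QQ l) x)"
  using PQ_disj[of l] by (auto simp: varphi_eq indicator_def power_mult_distrib)

lemma sum_mset_indicator: "sum_mset (image_mset (\<lambda>t. indicator A t) X) = real (count_in A X)"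
  by (induction X) (auto simp: count_in_def indicator_def)

lemma sum_mset_lin: fixes a :: real shows "sum_mset (image_mset (\<lambda>t. a * (g t - h t)) X)
   = a * (sum_mset (image_mset g X) - sum_mset (image_mset h X))"
  by (induction X) (auto simp: algebra_simps)

lemma sum_mset_lin2: fixes a :: real shows "sum_mset (image_mset (\<lambda>t. a * (g t + h t)) X)
   = a * (sum_mset (image_mset g X) + sum_mset (image_mset h X))"
  by (induction X) (auto simp: algebra_simps)

lemma beta_hat_eq: "beta_hat n X l = amp l / real n * (real (count_in (PP l) X) - real (count_in (QQ l) X))"
  unfolding beta_hat_def varphi_eq sum_mset_lin sum_mset_indicator by simp

lemma V_hat_eq: "V_hat n X l = (amp l / real n)\<^sup>2 * (real (count_in (PP l) X) + real (count_in (QQ l) X))"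
  unfolding V_hat_def varphi_sq sum_mset_lin2 sum_mset_indicator by (simp add: power_divide)

definition Eb :: "real \<Rightarrow> real \<Rightarrow> real" where
  "Eb x S = sqrt (2 * x * (S + sqrt (2 * x * S) + 3 * x)) + x / 3"

lemma eta_eq: "eta g n X l = amp l / real n *
   Eb (g * ln (real n)) (real (count_in (PP l) X) + real (count_in (QQ l) X))"
proof -
  define c where "c = amp l / real n"
  define S where "S = real (count_in (PP l) X) + real (count_in (QQ l) X)"
  define x where "x = g * ln (real n)"
  have c0: "c \<ge> 0" using amp_pos[of l] by (simp add: c_def)
  have Vh: "V_hat n X l = c\<^sup>2 * S" by (simp add: V_hat_eq c_def S_def)
  have "sqrt (2 * g * ln (real n) * V_hat n X l * (sup_norm (varphi l))\<^sup>2 / (real n)\<^sup>2)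
      = sqrt ((c\<^sup>2)\<^sup>2 * (2 * x * S))"
    by (simp add: Vh sup_norm_varphi c_def x_def power_divide field_simps power2_eq_square)
  also have "\<dots> = c\<^sup>2 * sqrt (2 * x * S)" by (simp only: real_sqrt_mult real_sqrt_abs abs_power2)
  finally have t2: "sqrt (2 * g * ln (real n) * V_hat n X l * (sup_norm (varphi l))\<^sup>2 / (real n)\<^sup>2)
      = c\<^sup>2 * sqrt (2 * x * S)" .
  have t3: "3 * g * ln (real n) * (sup_norm (varphi l))\<^sup>2 / (real n)\<^sup>2 = c\<^sup>2 * (3 * x)"
    by (simp add: sup_norm_varphi c_def x_def power_divide)
  have Vt: "V_tilde g n X l = c\<^sup>2 * (S + sqrt (2 * x * S) + 3 * x)"
    unfolding V_tilde_def t2 t3 by (simp add: Vh algebra_simps)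
  have "sqrt (2 * g * V_tilde g n X l * ln (real n)) = sqrt (c\<^sup>2 * (2 * x * (S + sqrt (2 * x * S) + 3 * x)))"
    unfolding Vt by (simp add: x_def algebra_simps)
  also have "\<dots> = c * sqrt (2 * x * (S + sqrt (2 * x * S) + 3 * x))"
    using c0 by (simp add: real_sqrt_mult)
  finally have e1: "sqrt (2 * g * V_tilde g n X l * ln (real n)) = c * sqrt (2 * x * (S + sqrt (2 * x * S) + 3 * x))" .
  have e2: "g * ln (real n) / (3 * real n) * sup_norm (varphi l) = c * (x / 3)"
    by (simp add: sup_norm_varphi c_def x_def mult.commute mult.left_commute)
  show ?thesis unfolding eta_def e1 e2 Eb_def
    by (simp add: c_def[symmetric] S_def[symmetric] x_def[symmetric] algebra_simps)
qed

definition len :: "real \<Rightarrow> real \<Rightarrow> real \<Rightarrow> real \<Rightarrow> real" where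
  "len a b c d = max 0 (min b d - max a c)"

lemma Icc_fmeas: "{a..b::real} \<in> fmeasurable lborel"
  by (intro fmeasurableI) (auto simp: emeasure_lborel_Icc_eq)

lemma meas_sandwich:
  assumes S: "S \<in> sets borel" and s1: "{a<..<b} \<subseteq> S" and s2: "S \<subseteq> {a..b::real}"
  shows "measure lborel S = max 0 (b - a)"
proof (cases "a \<le> b")
  case True
  have Sf: "S \<in> fmeasurable lborel" using S s2 by (intro fmeasurableI2[OF Icc_fmeas]) auto
  have "measure lborel {a<..<b} \<le> measure lborel S"
    by (rule measure_mono_fmeasurable[OF s1 _ Sf]) simp
  moreover have "measure lborel S \<le> measure lborel {a..b}"
    by (rule measure_mono_fmeasurable[OF s2 _ Icc_fmeas]) (use S in simp)
  ultimately show ?thesis using True by (simp add: measure_lborel_Ioo measure_lborel_Icc)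
next
  case False
  then have "S = {}" using s2 by auto
  then show ?thesis using False by simp
qed

lemma meas_inter:
  assumes I: "I \<in> sets borel" "{a<..<b} \<subseteq> I" "I \<subseteq> {a..b::real}"
    and J: "J \<in> sets borel" "{c<..<d} \<subseteq> J" "J \<subseteq> {c..d::real}"
  shows "measure lborel (I \<inter> J) = len a b c d"
  unfolding len_def
  by (rule meas_sandwich) (use I J in \<open>auto simp: subset_eq\<close>)

lemma PP_sand: "PP l \<in> sets borel" "{lo l<..<mid l} \<subseteq> PP l" "PP l \<subseteq> {lo l..mid l}"
  by (auto simp: PP_def)
lemma QQ_sand: "QQ l \<in> sets borel" "{mid l<..<hi l} \<subseteq> QQ l" "QQ l \<subseteq> {mid l..hi l}"
  by (auto simp: QQ_def)

lemma ind_integrable: "S \<in> sets borel \<Longrightarrow> S \<subseteq> {a..b::real} \<Longrightarrow> integrable lborel (indicator S :: real \<Rightarrow> real)"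
  using fmeasurableI2[OF Icc_fmeas, of S a b]
  by (auto simp: integrable_indicator_iff fmeasurable_def)

lemma PP_int: "integrable lborel (indicator (PP l) :: real \<Rightarrow> real)"
  using PP_sand[of l] by (intro ind_integrable) auto
lemma QQ_int: "integrable lborel (indicator (QQ l) :: real \<Rightarrow> real)"
  using QQ_sand[of l] by (intro ind_integrable) auto

lemma inter_int: "integrable lborel (indicator (A \<inter> B) :: real \<Rightarrow> real)"
  if "A \<in> sets borel" "B \<in> sets borel" "A \<subseteq> {a..b}" for A B :: "real set" and a b
  using that by (intro ind_integrable[of _ a b]) auto

lemma ip_varphi:
  "(LINT x|lborel. varphi l x * varphi l' x) = amp l * amp l' *
     (len (lo l) (mid l) (lo l') (mid l') - len (lo l) (mid l) (mid l') (hi l')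
      - len (mid l) (hi l) (lo l') (mid l') + len (mid l) (hi l) (mid l') (hi l'))"
proof -
  let ?i = "\<lambda>A B x. indicator (A \<inter> B) x :: real"
  have pw: "varphi l x * varphi l' x = amp l * amp l' *
     (?i (PP l) (PP l') x - ?i (PP l) (QQ l') x - ?i (QQ l) (PP l') x + ?i (QQ l) (QQ l') x)" for x
    by (simp add: varphi_eq indicator_inter_arith algebra_simps)
  have i1: "integrable lborel (?i (PP l) (PP l'))" "integrable lborel (?i (PP l) (QQ l'))"
    "integrable lborel (?i (QQ l) (PP l'))" "integrable lborel (?i (QQ l) (QQ l'))"
    using PP_sand[of l] PP_sand[of l'] QQ_sand[of l] QQ_sand[of l'] by (auto intro!: inter_int)
  have m: "measure lborel (PP l \<inter> PP l') = len (lo l) (mid l) (lo l') (mid l')"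
     "measure lborel (PP l \<inter> QQ l') = len (lo l) (mid l) (mid l') (hi l')"
     "measure lborel (QQ l \<inter> PP l') = len (mid l) (hi l) (lo l') (mid l')"
     "measure lborel (QQ l \<inter> QQ l') = len (mid l) (hi l) (mid l') (hi l')"
    by (rule meas_inter; (rule PP_sand QQ_sand)?)+
  show ?thesis unfolding pw using i1
    by (simp add: m[symmetric])
qed

lemma len_disj: "b \<le> c \<or> d \<le> a \<Longrightarrow> len a b c d = 0"
  unfolding len_def by linarith

lemma len_in: "a \<le> c \<Longrightarrow> c \<le> d \<Longrightarrow> d \<le> b \<Longrightarrow> len a b c d = d - c"
  unfolding len_def by linarith

lemma len_nest:
  assumes "a \<le> b" "w > 0" "a \<le> p \<or> p + w \<le> a" "b \<le> p \<or> p + w \<le> b"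
  shows "len a b p (p + w / 2) = len a b (p + w / 2) (p + w)"
proof -
  consider "b \<le> p" | "p + w \<le> a" | "a \<le> p" "p + w \<le> b" using assms by linarith
  then show ?thesis
  proof cases
    case 1 then show ?thesis using assms by (simp add: len_disj)
  next
    case 2 then show ?thesis using assms by (simp add: len_disj)
  next
    case 3 then show ?thesis using assms by (simp add: len_in)
  qed
qed

lemma len_self: "a \<le> b \<Longrightarrow> len a b a b = b - a"
  unfolding len_def by linarith

lemma len_adj: "a \<le> b \<Longrightarrow> b \<le> c \<Longrightarrow> len a b b c = 0" "a \<le> b \<Longrightarrow> b \<le> c \<Longrightarrow> len b c a b = 0"
  unfolding len_def by linarith+

lemma grid:
  fixes m k :: int and s :: real assumes "s > 0"
  shows "m / s \<le> k / s \<or> (real_of_int k + 1) / s \<le> m / s"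
proof (cases "m \<le> k")
  case True
  have "real_of_int m / s \<le> real_of_int k / s" using True assms by (intro divide_right_mono) auto
  then show ?thesis by blast
next
  case False then have "k + 1 \<le> m" by simp
  then have "real_of_int k + 1 \<le> real_of_int m" by linarith
  then have "(real_of_int k + 1) / s \<le> real_of_int m / s" using assms by (intro divide_right_mono) auto
  then show ?thesis by blast
qed

lemma powr_split:
  fixes j j' :: int assumes "j \<le> j'"
  shows "(2::real) powr real_of_int j' = 2 powr real_of_int j * 2 ^ nat (j' - j)"
proof -
  have "real_of_int j' = real_of_int j + real (nat (j' - j))" using assms by simp
  then have "(2::real) powr real_of_int j' = 2 powr real_of_int j * 2 powr real (nat (j' - j))"
    by (simp only: powr_add[symmetric])
  also have "(2::real) powr real (nat (j' - j)) = 2 ^ nat (j' - j)" by (rule powr_realpow) simp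
  finally show ?thesis .
qed

lemma fine_shape:
  assumes "fst l' \<ge> 0"
  shows "mid l' = lo l' + (1 / scl l') / 2" "hi l' = lo l' + 1 / scl l'"
    "lo l' = real_of_int (snd l') / scl l'" "hi l' = (real_of_int (snd l') + 1) / scl l'"
  using assms scl_pos[of l'] by (auto simp: mid_def lo_def hi_def add_divide_distrib)

lemma bnd_int:
  assumes j: "fst l \<ge> -1" and jj: "fst l < fst l'"
  shows "\<exists>m::int. lo l = m / scl l'" "\<exists>m::int. mid l = m / scl l'" "\<exists>m::int. hi l = m / scl l'"
proof -
  obtain j k where l: "l = (j, k)" by (cases l)
  obtain j' k' where l': "l' = (j', k')" by (cases l')
  have jj': "j < j'" using jj l l' by simp
  have j'0: "j' \<ge> 0" using j jj' l by simp
  have s': "scl l' = 2 powr real_of_int j'" using j'0 l' by (simp add: scl_def)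
  have ex: "\<exists>m::int. a = m / scl l'" if "a * scl l' = real_of_int m" for a m
    using that scl_pos[of l'] by (intro exI[of _ m]) (simp add: field_simps)
  show "\<exists>m::int. lo l = m / scl l'" "\<exists>m::int. mid l = m / scl l'" "\<exists>m::int. hi l = m / scl l'"
  proof -
    consider "j = -1" | "j \<ge> 0" using j l by fastforce
    then have "(\<exists>m::int. lo l = m / scl l') \<and> (\<exists>m::int. mid l = m / scl l') \<and> (\<exists>m::int. hi l = m / scl l')"
    proof cases
      case 1
      have p: "scl l' = 2 ^ nat j'" using s' j'0 by (simp add: powr_split[of 0 j'])
      have "lo l * scl l' = real_of_int (k * 2 ^ nat j')" "mid l * scl l' = real_of_int ((k + 1) * 2 ^ nat j')"
        "hi l * scl l' = real_of_int ((k + 1) * 2 ^ nat j')"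
        using 1 l p by (simp_all add: lo_def mid_def hi_def scl_def)
      then show ?thesis using ex by blast
    next
      case 2
      define d where "d = nat (j' - j)"
      have d1: "d \<ge> 1" using jj' by (simp add: d_def)
      have ss: "scl l' = scl l * 2 ^ d" using s' powr_split[of j j'] jj' 2 l by (simp add: scl_def d_def)
      have sl: "scl l > 0" by (rule scl_pos)
      have d2: "(2::real) ^ d = 2 * 2 ^ (d - 1)" using d1 by (simp add: power_eq_if)
      have "lo l * scl l' = real_of_int (k * 2 ^ d)"
        using sl 2 l by (simp add: ss lo_def)
      moreover have "hi l * scl l' = real_of_int ((k + 1) * 2 ^ d)"
        using sl 2 l by (simp add: ss hi_def)
      moreover have "mid l * scl l' = real_of_int ((2 * k + 1) * 2 ^ (d - 1))"
        using sl 2 l by (simp add: ss mid_def d2 field_simps)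
      ultimately show ?thesis using ex by blast
    qed
    then show "\<exists>m::int. lo l = m / scl l'" "\<exists>m::int. mid l = m / scl l'" "\<exists>m::int. hi l = m / scl l'"
      by blast+
  qed
qed

lemma bnd_side:
  assumes "fst l \<ge> -1" "fst l < fst l'" "b \<in> {lo l, mid l, hi l}"
  shows "b \<le> lo l' \<or> lo l' + 1 / scl l' \<le> b"
proof -
  have j'0: "fst l' \<ge> 0" using assms by simp
  obtain m :: int where m: "b = m / scl l'" using bnd_int[OF assms(1,2)] assms(3) by blast
  show ?thesis using grid[OF scl_pos[of l'], of m "snd l'"] fine_shape[OF j'0] m
    by (simp add: add_divide_distrib)
qed

lemma comb_zero_fine:
  assumes "fst l \<ge> -1" "fst l < fst l'"
  shows "len (lo l) (mid l) (lo l') (mid l') - len (lo l) (mid l) (mid l') (hi l')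
      - len (mid l) (hi l) (lo l') (mid l') + len (mid l) (hi l) (mid l') (hi l') = 0"
proof -
  have j'0: "fst l' \<ge> 0" using assms by simp
  define w where "w = 1 / scl l'"
  have w: "w > 0" using scl_pos[of l'] by (simp add: w_def)
  note fs = fine_shape[OF j'0, folded w_def]
  have b: "b \<le> lo l' \<or> lo l' + w \<le> b" if "b \<in> {lo l, mid l, hi l}" for b
    using bnd_side[OF assms that] by (simp add: w_def)
  have e1: "len (lo l) (mid l) (lo l') (lo l' + w / 2) = len (lo l) (mid l) (lo l' + w / 2) (lo l' + w)"
    by (rule len_nest[OF lo_mid w]) (use b in auto)
  have e2: "len (mid l) (hi l) (lo l') (lo l' + w / 2) = len (mid l) (hi l) (lo l' + w / 2) (lo l' + w)"
    by (rule len_nest[OF mid_hi w]) (use b in auto)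
  show ?thesis unfolding fs(1,2) e1 e2 by simp
qed

lemma comb_zero_same:
  assumes "fst l = fst l'" "snd l \<noteq> snd l'"
  shows "len (lo l) (mid l) (lo l') (mid l') - len (lo l) (mid l) (mid l') (hi l')
      - len (mid l) (hi l) (lo l') (mid l') + len (mid l) (hi l) (mid l') (hi l') = 0"
proof -
  have s: "scl l = scl l'" using assms by (simp add: scl_def)
  have sp: "scl l > 0" by (rule scl_pos)
  have d: "hi l \<le> lo l' \<or> hi l' \<le> lo l"
  proof (cases "snd l < snd l'")
    case True
    then have "real_of_int (snd l) + 1 \<le> real_of_int (snd l')" by linarith
    then show ?thesis using sp s by (auto simp: hi_def lo_def intro!: divide_right_mono)
  next
    case False
    then have "real_of_int (snd l') + 1 \<le> real_of_int (snd l)" using assms by linarith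
    then show ?thesis using sp s by (auto simp: hi_def lo_def intro!: divide_right_mono)
  qed
  have o: "lo l \<le> mid l" "mid l \<le> hi l" "lo l' \<le> mid l'" "mid l' \<le> hi l'"
    by (rule lo_mid mid_hi)+
  have "len (lo l) (mid l) (lo l') (mid l') = 0" "len (lo l) (mid l) (mid l') (hi l') = 0"
    "len (mid l) (hi l) (lo l') (mid l') = 0" "len (mid l) (hi l) (mid l') (hi l') = 0"
    using d o by (auto intro!: len_disj)
  then show ?thesis by simp
qed

lemma amp_width: "fst l \<ge> -1 \<Longrightarrow> (amp l)\<^sup>2 * (hi l - lo l) = 1"
proof -
  assume "fst l \<ge> -1"
  show ?thesis
  proof (cases "fst l = -1")
    case True then show ?thesis by (simp add: amp_def hi_def lo_def scl_def)
  next
    case False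
    have "(2 powr (real_of_int (fst l) / 2))\<^sup>2 = (2::real) powr real_of_int (fst l)"
      by (simp add: powr_powr[symmetric] power2_eq_square powr_add[symmetric])
    then show ?thesis using False
      by (simp add: amp_def hi_def lo_def scl_def diff_divide_distrib[symmetric])
  qed
qed

lemma varphi_orthonormal:
  assumes "fst l \<ge> -1" "fst l' \<ge> -1"
  shows "(LINT x|lborel. varphi l x * varphi l' x) = (if l = l' then 1 else 0)"
proof (cases "l = l'")
  case True
  have "(LINT x|lborel. varphi l x * varphi l x) = (amp l)\<^sup>2 * (hi l - lo l)"
    unfolding ip_varphi using lo_mid[of l] mid_hi[of l]
    by (simp add: len_self len_adj power2_eq_square)
  then show ?thesis using True amp_width[OF assms(1)] by simp
next
  case False
  have gen: "(LINT x|lborel. varphi a x * varphi b x) = 0"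
    if "fst a \<ge> -1" "fst b \<ge> -1" "a \<noteq> b" "fst a \<le> fst b" for a b
  proof -
    have "len (lo a) (mid a) (lo b) (mid b) - len (lo a) (mid a) (mid b) (hi b)
      - len (mid a) (hi a) (lo b) (mid b) + len (mid a) (hi a) (mid b) (hi b) = 0"
    proof (cases "fst a = fst b")
      case True
      then have "snd a \<noteq> snd b" using that(3) by (metis prod.expand)
      then show ?thesis using comb_zero_same[OF True] by simp
    next
      case False
      then show ?thesis using comb_zero_fine[of a b] that by simp
    qed
    then show ?thesis unfolding ip_varphi by simp
  qed
  show ?thesis
  proof (cases "fst l \<le> fst l'")
    case True then show ?thesis using gen[OF assms False] False by simp
  next
    case f: False
    have "(LINT x|lborel. varphi l x * varphi l' x) = (LINT x|lborel. varphi l' x * varphi l x)"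
      by (simp add: mult.commute)
    then show ?thesis using gen[of l' l] assms False f by auto
  qed
qed

definition sqi :: "(real \<Rightarrow> real) \<Rightarrow> bool" where
  "sqi g \<longleftrightarrow> g \<in> borel_measurable lborel \<and> integrable lborel (\<lambda>x. (g x)\<^sup>2)"

definition ip :: "(real \<Rightarrow> real) \<Rightarrow> (real \<Rightarrow> real) \<Rightarrow> real" where
  "ip g h = (LINT x|lborel. g x * h x)"

lemma abs_prod_le: "\<bar>a * b\<bar> \<le> a\<^sup>2 + b\<^sup>2" for a b :: real
proof -
  have "0 \<le> (\<bar>a\<bar> - \<bar>b\<bar>)\<^sup>2" by simp
  then have "2 * (\<bar>a\<bar> * \<bar>b\<bar>) \<le> \<bar>a\<bar>\<^sup>2 + \<bar>b\<bar>\<^sup>2" by (simp add: power2_eq_square algebra_simps)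
  moreover have "0 \<le> \<bar>a\<bar> * \<bar>b\<bar>" by simp
  moreover have "\<bar>a\<bar>\<^sup>2 = a\<^sup>2" "\<bar>b\<bar>\<^sup>2 = b\<^sup>2" by simp_all
  ultimately have "\<bar>a\<bar> * \<bar>b\<bar> \<le> a\<^sup>2 + b\<^sup>2" by linarith
  then show ?thesis by (simp add: abs_mult)
qed

lemma sqi_prod_int:
  assumes "sqi g" "sqi h" shows "integrable lborel (\<lambda>x. g x * h x)"
proof (rule Bochner_Integration.integrable_bound)
  show "integrable lborel (\<lambda>x. (g x)\<^sup>2 + (h x)\<^sup>2)" using assms by (auto simp: sqi_def)
  show "(\<lambda>x. g x * h x) \<in> borel_measurable lborel" using assms by (auto simp: sqi_def)
  show "AE x in lborel. norm (g x * h x) \<le> norm ((g x)\<^sup>2 + (h x)\<^sup>2)"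
    using abs_prod_le by (intro AE_I2) simp
qed

lemma sqi_add: assumes "sqi g" "sqi h" shows "sqi (\<lambda>x. g x + h x)"
proof -
  have "integrable lborel (\<lambda>x. (g x)\<^sup>2 + (h x)\<^sup>2 + 2 * (g x * h x))"
    using assms sqi_prod_int[OF assms] by (auto simp: sqi_def)
  moreover have "(g x + h x)\<^sup>2 = (g x)\<^sup>2 + (h x)\<^sup>2 + 2 * (g x * h x)" for x
    by (simp add: power2_eq_square algebra_simps)
  ultimately show ?thesis using assms by (auto simp: sqi_def)
qed

lemma sqi_cmult: assumes "sqi g" shows "sqi (\<lambda>x. c * g x)"
  using assms by (auto simp: sqi_def power_mult_distrib)

lemma sqi_neg: assumes "sqi g" shows "sqi (\<lambda>x. - g x)"
  using sqi_cmult[OF assms, of "-1"] by simp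

lemma sqi_diff: assumes "sqi g" "sqi h" shows "sqi (\<lambda>x. g x - h x)"
  using sqi_add[OF assms(1) sqi_neg[OF assms(2)]] by simp

lemma sqi_zero: "sqi (\<lambda>x. 0)" by (simp add: sqi_def)

lemma sqi_sum: assumes "\<And>i. i \<in> F \<Longrightarrow> sqi (e i)" shows "sqi (\<lambda>x. \<Sum>i\<in>F. c i * e i x)"
  using assms
proof (induction F rule: infinite_finite_induct)
  case (infinite F) then show ?case by (simp add: sqi_zero)
next
  case empty then show ?case by (simp add: sqi_zero)
next
  case (insert i F)
  then show ?case by (simp add: sqi_add sqi_cmult)
qed

lemma ip_comm: "ip g h = ip h g" by (simp add: ip_def mult.commute)

lemma ip_diff_left: "sqi g1 \<Longrightarrow> sqi g2 \<Longrightarrow> sqi h \<Longrightarrow> ip (\<lambda>x. g1 x - g2 x) h = ip g1 h - ip g2 h"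
  unfolding ip_def using sqi_prod_int[of g1 h] sqi_prod_int[of g2 h]
  by (simp add: left_diff_distrib)

lemma ip_sum_left:
  assumes "\<And>i. i \<in> F \<Longrightarrow> sqi (e i)" "sqi h"
  shows "ip (\<lambda>x. \<Sum>i\<in>F. c i * e i x) h = (\<Sum>i\<in>F. c i * ip (e i) h)"
proof -
  have "ip (\<lambda>x. \<Sum>i\<in>F. c i * e i x) h = (LINT x|lborel. (\<Sum>i\<in>F. c i * (e i x * h x)))"
    unfolding ip_def by (simp add: sum_distrib_right mult.assoc)
  also have "\<dots> = (\<Sum>i\<in>F. LINT x|lborel. c i * (e i x * h x))"
    by (rule Bochner_Integration.integral_sum[where f="\<lambda>i x. c i * (e i x * h x)"]) (use assms sqi_prod_int in auto)
  also have "\<dots> = (\<Sum>i\<in>F. c i * ip (e i) h)" by (simp add: ip_def)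
  finally show ?thesis .
qed

lemma ip_sq_nonneg: "ip g g \<ge> 0"
  unfolding ip_def by (rule integral_nonneg_AE) simp

lemma bessel:
  assumes h: "sqi h" and F: "finite F" and e: "\<And>i. i \<in> F \<Longrightarrow> sqi (e i)"
    and on: "\<And>i j. i \<in> F \<Longrightarrow> j \<in> F \<Longrightarrow> ip (e i) (e j) = (if i = j then 1 else 0)"
  shows "(\<Sum>i\<in>F. (ip h (e i))\<^sup>2) \<le> ip h h"
proof -
  define a where "a i = ip h (e i)" for i
  define P where "P x = (\<Sum>i\<in>F. a i * e i x)" for x
  have sP: "sqi P" unfolding P_def using e by (rule sqi_sum)
  have hP: "ip P h = (\<Sum>i\<in>F. (a i)\<^sup>2)"
    unfolding P_def by (simp add: ip_sum_left[where e=e and F=F, OF e h] a_def ip_comm[of "e _" h] power2_eq_square)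
  have eqP: "P = (\<lambda>x. \<Sum>i\<in>F. a i * e i x)" by (simp add: P_def fun_eq_iff)
  have PP: "ip P P = (\<Sum>i\<in>F. (a i)\<^sup>2)"
  proof -
    have "ip P P = (\<Sum>i\<in>F. a i * ip (e i) P)"
      using ip_sum_left[where e=e and F=F and c=a, OF e sP] by (simp only: eqP[symmetric])
    also have "\<dots> = (\<Sum>i\<in>F. a i * a i)"
    proof (intro sum.cong refl)
      fix i assume i: "i \<in> F"
      have "ip (e i) P = ip P (e i)" by (rule ip_comm)
      also have "\<dots> = (\<Sum>j\<in>F. a j * ip (e j) (e i))"
        using ip_sum_left[where e=e and F=F and c=a, OF e e[OF i]] by (simp only: eqP[symmetric])
      also have "\<dots> = (\<Sum>j\<in>F. if j = i then a j else 0)"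
        using i by (intro sum.cong refl) (simp add: on)
      also have "\<dots> = a i" using i F by simp
      finally show "a i * ip (e i) P = a i * a i" by simp
    qed
    finally show ?thesis by (simp add: power2_eq_square)
  qed
  have r: "sqi (\<lambda>x. h x - P x)" using h sP by (rule sqi_diff)
  have "0 \<le> ip (\<lambda>x. h x - P x) (\<lambda>x. h x - P x)" by (rule ip_sq_nonneg)
  also have "\<dots> = ip h (\<lambda>x. h x - P x) - ip P (\<lambda>x. h x - P x)"
    by (rule ip_diff_left[OF h sP r])
  also have "ip h (\<lambda>x. h x - P x) = ip h h - ip P h"
    by (subst ip_comm, subst ip_diff_left[OF h sP h]) (simp add: ip_comm)
  also have "ip P (\<lambda>x. h x - P x) = ip P h - ip P P"
    by (subst ip_comm, subst ip_diff_left[OF h sP sP]) (simp add: ip_comm)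
  finally have "0 \<le> ip h h - (\<Sum>i\<in>F. (a i)\<^sup>2)" using hP PP by simp
  then show ?thesis by (simp add: a_def)
qed

lemma varphi_meas: "varphi l \<in> borel_measurable lborel"
  unfolding varphi_eq[abs_def] PP_def QQ_def by measurable

lemma sqi_varphi: "sqi (varphi l)"
proof -
  have "integrable lborel (\<lambda>x. (amp l)\<^sup>2 * (indicator (PP l) x + indicator (QQ l) x))"
    using PP_int[of l] QQ_int[of l] by simp
  then show ?thesis unfolding sqi_def varphi_sq using varphi_meas by simp
qed

lemma ip_varphi_on:
  "fst l \<ge> -1 \<Longrightarrow> fst l' \<ge> -1 \<Longrightarrow> ip (varphi l) (varphi l') = (if l = l' then 1 else 0)"
  unfolding ip_def by (rule varphi_orthonormal)

lemma Gamma_fst: "l \<in> Gamma_n n \<Longrightarrow> fst l \<ge> -1 \<and> fst l \<le> j0 n"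
  by (auto simp: Gamma_n_def Lambda_idx_def)

lemma card_set_mset_le: "card (set_mset X) \<le> size X"
proof (induction X)
  case empty then show ?case by simp
next
  case (add x X)
  have "card (set_mset (add_mset x X)) \<le> Suc (card (set_mset X))"
    by (simp add: card_insert_le_m1)
  then show ?case using add by simp
qed

lemma sum_mset_zero: "(\<And>t. t \<in># X \<Longrightarrow> g t = (0::real)) \<Longrightarrow> sum_mset (image_mset g X) = 0"
  by (induction X) auto

definition supp :: "nat \<Rightarrow> real multiset \<Rightarrow> (int \<times> int) set" where
  "supp n X = {l \<in> Gamma_n n. \<exists>t \<in> set_mset X. varphi l t \<noteq> 0}"

lemma beta_hat_supp: "l \<notin> supp n X \<Longrightarrow> l \<in> Gamma_n n \<Longrightarrow> beta_hat n X l = 0"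
  unfolding beta_hat_def supp_def using sum_mset_zero[of X "varphi l"] by auto

definition scj :: "int \<Rightarrow> real" where "scj j = scl (j, 0)"

lemma scl_scj: "scl l = scj (fst l)" by (simp add: scj_def scl_def)

lemma varphi_nz_k:
  assumes "varphi l t \<noteq> 0"
  shows "snd l \<in> {\<lfloor>scj (fst l) * t\<rfloor> - 1..\<lfloor>scj (fst l) * t\<rfloor>}"
proof -
  have "t \<in> PP l \<or> t \<in> QQ l" using assms by (auto simp: varphi_eq indicator_def split: if_splits)
  then have t: "lo l \<le> t" "t \<le> hi l" using lo_mid[of l] mid_hi[of l] by (auto simp: PP_def QQ_def)
  define s where "s = scj (fst l)"
  have s: "s > 0" using scl_pos[of l] by (simp add: s_def scl_scj)
  have a: "real_of_int (snd l) \<le> s * t" using t(1) s by (simp add: lo_def scl_scj s_def[symmetric] field_simps)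
  have b: "s * t \<le> real_of_int (snd l) + 1" using t(2) s by (simp add: hi_def scl_scj s_def[symmetric] field_simps)
  have "snd l \<le> \<lfloor>s * t\<rfloor>" using a by (simp add: le_floor_iff)
  moreover have "\<lfloor>s * t\<rfloor> \<le> snd l + 1" using b by (simp add: floor_le_iff)
  ultimately show ?thesis by (simp add: s_def)
qed

definition boxset :: "nat \<Rightarrow> real \<Rightarrow> (int \<times> int) set" where
  "boxset n t = (\<Union>j\<in>{-1..j0 n}. (\<lambda>k. (j, k)) ` {\<lfloor>scj j * t\<rfloor> - 1..\<lfloor>scj j * t\<rfloor>})"

lemma boxset_finite: "finite (boxset n t)" by (simp add: boxset_def)

lemma boxset_card: "card (boxset n t) \<le> 2 * nat (j0 n + 2)"
proof -
  have "card (boxset n t) \<le> (\<Sum>j\<in>{-1..j0 n}. card ((\<lambda>k. (j, k)) ` {\<lfloor>scj j * t\<rfloor> - 1..\<lfloor>scj j * t\<rfloor>}))"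
    unfolding boxset_def by (rule card_UN_le) simp
  also have "\<dots> \<le> (\<Sum>j\<in>{-1..j0 n}. 2)"
  proof (rule sum_mono)
    fix j :: int
    have "card ((\<lambda>k. (j, k)) ` {\<lfloor>scj j * t\<rfloor> - 1..\<lfloor>scj j * t\<rfloor>}) \<le> card {\<lfloor>scj j * t\<rfloor> - 1..\<lfloor>scj j * t\<rfloor>}"
      by (rule card_image_le) simp
    then show "card ((\<lambda>k. (j, k)) ` {\<lfloor>scj j * t\<rfloor> - 1..\<lfloor>scj j * t\<rfloor>}) \<le> 2" by simp
  qed
  also have "\<dots> = 2 * nat (j0 n + 2)" by simp
  finally show ?thesis .
qed

lemma supp_sub: "supp n X \<subseteq> (\<Union>t\<in>set_mset X. boxset n t)"
proof
  fix l assume "l \<in> supp n X"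
  then obtain t where t: "t \<in># X" "varphi l t \<noteq> 0" and g: "l \<in> Gamma_n n" by (auto simp: supp_def)
  have k: "snd l \<in> {\<lfloor>scj (fst l) * t\<rfloor> - 1..\<lfloor>scj (fst l) * t\<rfloor>}" by (rule varphi_nz_k[OF t(2)])
  have "fst l \<in> {-1..j0 n}" using Gamma_fst[OF g] by simp
  then have "l \<in> boxset n t" unfolding boxset_def using k by (auto intro!: bexI[of _ "fst l"] image_eqI[of _ _ "snd l"])
  then show "l \<in> (\<Union>t\<in>set_mset X. boxset n t)" using t by auto
qed

lemma supp_finite: "finite (supp n X)"
  by (rule finite_subset[OF supp_sub]) (simp add: boxset_finite)

lemma supp_card: "card (supp n X) \<le> size X * (2 * nat (j0 n + 2))"
proof -
  have "card (supp n X) \<le> card (\<Union>t\<in>set_mset X. boxset n t)"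
    by (rule card_mono[OF _ supp_sub]) (simp add: boxset_finite)
  also have "\<dots> \<le> (\<Sum>t\<in>set_mset X. card (boxset n t))" by (rule card_UN_le) simp
  also have "\<dots> \<le> (\<Sum>t\<in>set_mset X. 2 * nat (j0 n + 2))" by (intro sum_mono boxset_card)
  also have "\<dots> = card (set_mset X) * (2 * nat (j0 n + 2))" by simp
  also have "\<dots> \<le> size X * (2 * nat (j0 n + 2))" by (intro mult_right_mono card_set_mset_le) simp
  finally show ?thesis .
qed

lemma supp_Gamma: "supp n X \<subseteq> Gamma_n n" by (auto simp: supp_def)

definition kept :: "real \<Rightarrow> nat \<Rightarrow> real multiset \<Rightarrow> int \<times> int \<Rightarrow> bool" where
  "kept g n X l \<longleftrightarrow> eta g n X l \<le> \<bar>beta_hat n X l\<bar>"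

definition cc :: "real \<Rightarrow> nat \<Rightarrow> real multiset \<Rightarrow> int \<times> int \<Rightarrow> real" where
  "cc g n X l = beta_hat n X l * (if \<bar>beta_hat n X l\<bar> \<ge> eta g n X l then 1 else 0)"

lemma cc_not_kept: "\<not> kept g n X l \<Longrightarrow> cc g n X l = 0"
  by (simp add: cc_def kept_def)

lemma cc_supp: "l \<notin> supp n X \<Longrightarrow> l \<in> Gamma_n n \<Longrightarrow> cc g n X l = 0"
  by (simp add: cc_def beta_hat_supp)

lemma ftil_repr:
  assumes T: "finite T" "supp n X \<subseteq> T" "T \<subseteq> Gamma_n n"
  shows "f_tilde_H n g X x = (\<Sum>l\<in>T. cc g n X l * varphi l x)"
proof -
  have "f_tilde_H n g X x = infsum (\<lambda>l. cc g n X l * varphi l x) T"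
    unfolding f_tilde_H_def
  proof (rule infsum_cong_neutral)
    fix l assume "l \<in> Gamma_n n - T"
    then show "beta_hat n X l * (if \<bar>beta_hat n X l\<bar> \<ge> eta g n X l then 1 else 0) * varphi l x = 0"
      using T(2) beta_hat_supp[of l n X] by auto
  qed (use T in \<open>auto simp: cc_def\<close>)
  also have "\<dots> = (\<Sum>l\<in>T. cc g n X l * varphi l x)" using T(1) by (rule infsum_finite)
  finally show ?thesis .
qed

lemma ftil_fun:
  assumes T: "finite T" "supp n X \<subseteq> T" "T \<subseteq> Gamma_n n"
  shows "f_tilde_H n g X = (\<lambda>x. \<Sum>l\<in>T. cc g n X l * varphi l x)"
  using ftil_repr[OF T] by auto

lemma sqi_ftil: "sqi (f_tilde_H n g X)"
  unfolding ftil_fun[OF supp_finite subset_refl supp_Gamma]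
  by (rule sqi_sum) (rule sqi_varphi)

lemma ip_ftil_varphi:
  assumes l: "l \<in> Gamma_n n"
  shows "ip (f_tilde_H n g X) (varphi l) = cc g n X l"
proof -
  define T where "T = insert l (supp n X)"
  have T: "finite T" "supp n X \<subseteq> T" "T \<subseteq> Gamma_n n"
    using supp_finite supp_Gamma l by (auto simp: T_def)
  have "ip (f_tilde_H n g X) (varphi l) = (\<Sum>l'\<in>T. cc g n X l' * ip (varphi l') (varphi l))"
    unfolding ftil_fun[OF T] by (rule ip_sum_left) (rule sqi_varphi)+
  also have "\<dots> = (\<Sum>l'\<in>T. if l' = l then cc g n X l' else 0)"
  proof (intro sum.cong refl)
    fix l' assume "l' \<in> T"
    then have "l' \<in> Gamma_n n" using T by auto
    then show "cc g n X l' * ip (varphi l') (varphi l) = (if l' = l then cc g n X l' else 0)"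
      using ip_varphi_on[of l' l] Gamma_fst[of l' n] Gamma_fst[OF l] by auto
  qed
  also have "\<dots> = cc g n X l" using T(1) by (simp add: T_def)
  finally show ?thesis .
qed

lemma sqi_f:
  assumes "integrable lborel f" "integrable lborel (\<lambda>x. (f x)\<^sup>2)" shows "sqi f"
  using assms by (auto simp: sqi_def)

lemma beta_ip: "beta f l = ip (varphi l) f" by (simp add: beta_def ip_def)

definition Yf :: "nat \<Rightarrow> real \<Rightarrow> (real \<Rightarrow> real) \<Rightarrow> real multiset \<Rightarrow> real" where
  "Yf n g f X = (LINT x|lborel. (f_tilde_H n g X x - f x)\<^sup>2)"

lemma Yf_ip: "Yf n g f X = ip (\<lambda>x. f_tilde_H n g X x - f x) (\<lambda>x. f_tilde_H n g X x - f x)"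
  by (simp add: Yf_def ip_def power2_eq_square)

lemma Yf_nonneg: "Yf n g f X \<ge> 0"
  unfolding Yf_ip by (rule ip_sq_nonneg)

lemma Yf_lower:
  assumes f: "sqi f" and F: "finite F" "F \<subseteq> Gamma_n n"
  shows "(\<Sum>l\<in>F. (beta f l)\<^sup>2 * (if kept g n X l then 0 else 1)) \<le> Yf n g f X"
proof -
  define h where "h = (\<lambda>x. f_tilde_H n g X x - f x)"
  have sh: "sqi h" unfolding h_def using sqi_ftil f by (rule sqi_diff)
  have ih: "ip h (varphi l) = cc g n X l - beta f l" if "l \<in> Gamma_n n" for l
  proof -
    have a: "ip (f_tilde_H n g X) (varphi l) = cc g n X l" by (rule ip_ftil_varphi[OF that])
    have b: "ip f (varphi l) = beta f l" by (simp add: beta_ip ip_comm)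
    show ?thesis unfolding h_def ip_diff_left[OF sqi_ftil f sqi_varphi] a b ..
  qed
  have "(\<Sum>l\<in>F. (beta f l)\<^sup>2 * (if kept g n X l then 0 else 1)) \<le> (\<Sum>l\<in>F. (ip h (varphi l))\<^sup>2)"
  proof (rule sum_mono)
    fix l assume "l \<in> F"
    then have "l \<in> Gamma_n n" using F by auto
    then show "(beta f l)\<^sup>2 * (if kept g n X l then 0 else 1) \<le> (ip h (varphi l))\<^sup>2"
      using ih cc_not_kept[of g n X l] by auto
  qed
  also have "\<dots> \<le> ip h h"
  proof (rule bessel[OF sh F(1)])
    show "\<And>i. i \<in> F \<Longrightarrow> sqi (varphi i)" by (rule sqi_varphi)
    fix i j assume "i \<in> F" "j \<in> F"
    then show "ip (varphi i) (varphi j) = (if i = j then 1 else 0)"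
      using F Gamma_fst[of i n] Gamma_fst[of j n] by (intro ip_varphi_on) auto
  qed
  finally show ?thesis by (simp add: Yf_ip h_def)
qed

lemma Yf_formula:
  assumes f: "sqi f" and T: "finite T" "supp n X \<subseteq> T" "T \<subseteq> Gamma_n n"
  shows "Yf n g f X = (\<Sum>l\<in>T. (cc g n X l)\<^sup>2 - 2 * (cc g n X l * beta f l)) + ip f f"
proof -
  let ?t = "f_tilde_H n g X"
  have st: "sqi ?t" by (rule sqi_ftil)
  have tt: "ip ?t ?t = (\<Sum>l\<in>T. (cc g n X l)\<^sup>2)"
  proof -
    have "ip ?t ?t = (\<Sum>l\<in>T. cc g n X l * ip (varphi l) ?t)"
      by (subst (1) ftil_fun[OF T]) (rule ip_sum_left[OF sqi_varphi st])
    also have "\<dots> = (\<Sum>l\<in>T. (cc g n X l)\<^sup>2)"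
    proof (intro sum.cong refl)
      fix l assume "l \<in> T"
      then have "l \<in> Gamma_n n" using T by auto
      then have "ip (varphi l) ?t = cc g n X l" using ip_ftil_varphi ip_comm by metis
      then show "cc g n X l * ip (varphi l) ?t = (cc g n X l)\<^sup>2" by (simp add: power2_eq_square)
    qed
    finally show ?thesis .
  qed
  have tf: "ip ?t f = (\<Sum>l\<in>T. cc g n X l * beta f l)"
    by (subst (1) ftil_fun[OF T]) (simp add: ip_sum_left[OF sqi_varphi f] beta_ip)
  have "Yf n g f X = ip ?t ?t - 2 * ip ?t f + ip f f"
  proof -
    have s1: "sqi (\<lambda>x. ?t x - f x)" using st f by (rule sqi_diff)
    have "Yf n g f X = ip ?t (\<lambda>x. ?t x - f x) - ip f (\<lambda>x. ?t x - f x)"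
      unfolding Yf_ip by (rule ip_diff_left[OF st f s1])
    also have "ip ?t (\<lambda>x. ?t x - f x) = ip ?t ?t - ip f ?t"
      by (subst ip_comm, subst ip_diff_left[OF st f st]) (simp add: ip_comm)
    also have "ip f (\<lambda>x. ?t x - f x) = ip ?t f - ip f f"
      by (subst ip_comm, subst ip_diff_left[OF st f f]) (simp add: ip_comm)
    finally have "Yf n g f X = ip ?t ?t - ip f ?t - (ip ?t f - ip f f)" .
    moreover have "ip f ?t = ip ?t f" by (rule ip_comm)
    ultimately show ?thesis by linarith
  qed
  then show ?thesis using tt tf by (simp add: sum_subtractf sum_distrib_left)
qed

lemma meas_two_counts:
  fixes F :: "nat \<Rightarrow> nat \<Rightarrow> 'b::topological_space"
  assumes Z1: "Z1 \<in> M \<rightarrow>\<^sub>M count_space UNIV" and Z2: "Z2 \<in> M \<rightarrow>\<^sub>M count_space UNIV"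
  shows "(\<lambda>\<omega>. F (Z1 \<omega>) (Z2 \<omega>)) \<in> borel_measurable M"
proof -
  have "(\<lambda>\<omega>. F i (Z2 \<omega>)) \<in> borel_measurable M" for i
    using measurable_compose_countable[where f="\<lambda>j \<omega>. F i j" and g=Z2 and M=M and N=borel] Z2 by simp
  then show ?thesis
    using measurable_compose_countable[where f="\<lambda>i \<omega>. F i (Z2 \<omega>)" and g=Z1 and M=M and N=borel] Z1 by simp
qed

lemma sets_two_counts:
  fixes P :: "nat \<Rightarrow> nat \<Rightarrow> bool"
  assumes Z1: "Z1 \<in> M \<rightarrow>\<^sub>M count_space UNIV" and Z2: "Z2 \<in> M \<rightarrow>\<^sub>M count_space UNIV"
  shows "{\<omega>\<in>space M. P (Z1 \<omega>) (Z2 \<omega>)} \<in> sets M"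
proof -
  have "(\<lambda>\<omega>. P i (Z2 \<omega>)) \<in> M \<rightarrow>\<^sub>M count_space UNIV" for i
    using measurable_compose_countable[where f="\<lambda>j \<omega>. P i j" and g=Z2 and M=M and N="count_space UNIV"] Z2 by simp
  then have m: "(\<lambda>\<omega>. P (Z1 \<omega>) (Z2 \<omega>)) \<in> M \<rightarrow>\<^sub>M count_space UNIV"
    using measurable_compose_countable[where f="\<lambda>i \<omega>. P i (Z2 \<omega>)" and g=Z1 and M=M and N="count_space UNIV"] Z1 by simp
  have "(\<lambda>\<omega>. P (Z1 \<omega>) (Z2 \<omega>)) -` {True} \<inter> space M \<in> sets M"
    by (rule measurable_sets[OF m]) simp
  moreover have "(\<lambda>\<omega>. P (Z1 \<omega>) (Z2 \<omega>)) -` {True} \<inter> space M = {\<omega>\<in>space M. P (Z1 \<omega>) (Z2 \<omega>)}" by auto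
  ultimately show ?thesis by simp
qed

lemma count_le_size: "count_in A X \<le> size X"
  by (simp add: count_in_def size_filter_mset_lesseq)

lemma count_UNIV: "count_in UNIV X = size X" by (simp add: count_in_def)

definition Amax :: "nat \<Rightarrow> real" where "Amax n = 2 powr (real_of_int (j0 n) / 2) + 1"

lemma amp_le_Amax: "l \<in> Gamma_n n \<Longrightarrow> amp l \<le> Amax n"
proof -
  assume l: "l \<in> Gamma_n n"
  then have j: "fst l \<le> j0 n" using Gamma_fst by blast
  show ?thesis
  proof (cases "fst l = -1")
    case True then show ?thesis by (simp add: amp_def Amax_def)
  next
    case False
    have "2 powr (real_of_int (fst l) / 2) \<le> 2 powr (real_of_int (j0 n) / 2)"
      using j by (intro powr_mono) auto
    moreover have "amp l = 2 powr (real_of_int (fst l) / 2)" using False by (simp add: amp_def)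
    ultimately show ?thesis unfolding Amax_def by linarith
  qed
qed

lemma abs_beta_hat_le: "\<bar>beta_hat n X l\<bar> \<le> amp l / real n * real (size X)"
proof -
  have a: "real (count_in (PP l) X) \<le> real (size X)" "real (count_in (QQ l) X) \<le> real (size X)"
    using count_le_size by (auto simp del: of_nat_le_iff simp: of_nat_le_iff[symmetric])
  have "\<bar>real (count_in (PP l) X) - real (count_in (QQ l) X)\<bar> \<le> real (size X)" using a by linarith
  moreover have c: "amp l / real n \<ge> 0" using amp_pos[of l] by simp
  ultimately have "amp l / real n * \<bar>real (count_in (PP l) X) - real (count_in (QQ l) X)\<bar> \<le> amp l / real n * real (size X)"
    by (intro mult_left_mono)
  then show ?thesis unfolding beta_hat_eq abs_mult using c amp_pos[of l] by simp
qed

lemma cc_sq_le: "l \<in> Gamma_n n \<Longrightarrow> (cc g n X l)\<^sup>2 \<le> (Amax n / real n * real (size X))\<^sup>2"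
proof -
  assume l: "l \<in> Gamma_n n"
  have "\<bar>cc g n X l\<bar> \<le> \<bar>beta_hat n X l\<bar>" by (simp add: cc_def)
  also have "\<dots> \<le> amp l / real n * real (size X)" by (rule abs_beta_hat_le)
  also have "\<dots> \<le> Amax n / real n * real (size X)"
    using amp_le_Amax[OF l] by (intro mult_right_mono divide_right_mono) auto
  finally show ?thesis by (metis abs_le_square_iff abs_of_nonneg abs_ge_zero order_trans power2_abs)
qed

lemma Yf_upper:
  assumes f: "sqi f"
  shows "Yf n g f X \<le> 2 * (real (size X) * (2 * nat (j0 n + 2)) * (Amax n / real n * real (size X))\<^sup>2) + 2 * ip f f"
proof -
  let ?T = "supp n X"
  have T: "finite ?T" "supp n X \<subseteq> ?T" "?T \<subseteq> Gamma_n n" by (auto simp: supp_finite supp_Gamma)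
  have bes: "(\<Sum>l\<in>?T. (beta f l)\<^sup>2) \<le> ip f f"
  proof -
    have "(\<Sum>l\<in>?T. (ip f (varphi l))\<^sup>2) \<le> ip f f"
    proof (rule bessel[OF f T(1)])
      show "\<And>i. i \<in> ?T \<Longrightarrow> sqi (varphi i)" by (rule sqi_varphi)
      fix i j assume "i \<in> ?T" "j \<in> ?T"
      then show "ip (varphi i) (varphi j) = (if i = j then 1 else 0)"
        using T Gamma_fst[of i n] Gamma_fst[of j n] by (intro ip_varphi_on) auto
    qed
    then show ?thesis by (simp add: beta_ip ip_comm)
  qed
  have t1: "(cc g n X l)\<^sup>2 - 2 * (cc g n X l * beta f l) \<le> 2 * (cc g n X l)\<^sup>2 + (beta f l)\<^sup>2" for l
  proof -
    have "0 \<le> (cc g n X l + beta f l)\<^sup>2" by simp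
    then show ?thesis by (simp add: power2_eq_square algebra_simps)
  qed
  have "Yf n g f X = (\<Sum>l\<in>?T. (cc g n X l)\<^sup>2 - 2 * (cc g n X l * beta f l)) + ip f f"
    by (rule Yf_formula[OF f T])
  also have "\<dots> \<le> (\<Sum>l\<in>?T. 2 * (cc g n X l)\<^sup>2 + (beta f l)\<^sup>2) + ip f f"
    by (intro add_right_mono sum_mono t1)
  also have "\<dots> = 2 * (\<Sum>l\<in>?T. (cc g n X l)\<^sup>2) + (\<Sum>l\<in>?T. (beta f l)\<^sup>2) + ip f f"
    by (simp add: sum.distrib sum_distrib_left)
  also have "(\<Sum>l\<in>?T. (cc g n X l)\<^sup>2) \<le> (\<Sum>l\<in>?T. (Amax n / real n * real (size X))\<^sup>2)"
    using T by (intro sum_mono cc_sq_le) auto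
  also have "\<dots> = real (card ?T) * (Amax n / real n * real (size X))\<^sup>2" by simp
  also have "\<dots> \<le> real (size X) * (2 * nat (j0 n + 2)) * (Amax n / real n * real (size X))\<^sup>2"
  proof (rule mult_right_mono)
    have "card ?T \<le> size X * (2 * nat (j0 n + 2))" by (rule supp_card)
    then show "real (card ?T) \<le> real (size X) * (2 * nat (j0 n + 2))"
      by (metis of_nat_le_iff of_nat_mult of_nat_numeral)
  qed simp
  finally show ?thesis using bes by linarith
qed

definition Ccount :: "real \<Rightarrow> nat \<Rightarrow> int \<times> int \<Rightarrow> nat \<Rightarrow> nat \<Rightarrow> real" where
  "Ccount g n l a b = amp l / real n * (real a - real b) *
     (if amp l / real n * Eb (g * ln (real n)) (real a + real b) \<le> \<bar>amp l / real n * (real a - real b)\<bar> then 1 else 0)"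

lemma cc_count: "cc g n X l = Ccount g n l (count_in (PP l) X) (count_in (QQ l) X)"
  by (simp add: cc_def Ccount_def beta_hat_eq eta_eq)

lemma real_cube_le_exp: "(real k)^3 \<le> exp (3 * real k)"
proof -
  have "real k \<le> exp (real k)" using exp_ge_add_one_self[of "real k"] by linarith
  then have "(real k)^3 \<le> (exp (real k))^3" by (intro power_mono) auto
  also have "\<dots> = exp (3 * real k)" by (simp add: exp_of_nat_mult[symmetric])
  finally show ?thesis .
qed

locale LS =
  fixes f :: "real \<Rightarrow> real" and n :: nat and M :: "'a measure"
    and N :: "'a \<Rightarrow> real multiset" and \<gamma> \<gamma>min :: real
  assumes f_nonneg: "\<And>x. f x \<ge> 0"
    and f_L1: "integrable lborel f"
    and f_L2: "integrable lborel (\<lambda>x. (f x)\<^sup>2)"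
    and n_ge: "n \<ge> 2"
    and PPr: "poisson_process M N (density lborel (\<lambda>x. ennreal (real n * f x)))"
    and gam: "1 < \<gamma>min" "\<gamma>min < \<gamma>"
begin

abbreviation "\<nu> \<equiv> density lborel (\<lambda>x. ennreal (real n * f x))"

lemma P: "prob_space M" using PPr by (simp add: poisson_process_def)

sublocale prob_space M by (rule P)

lemma cnt_meas: "A \<in> sets borel \<Longrightarrow> (\<lambda>\<omega>. count_in A (N \<omega>)) \<in> M \<rightarrow>\<^sub>M count_space UNIV"
  using PPr by (simp add: poisson_process_def)

lemma cnt_dist: "A \<in> sets borel \<Longrightarrow>
   measure M {\<omega>\<in>space M. count_in A (N \<omega>) = k} = exp (- measure \<nu> A) * (measure \<nu> A) ^ k / fact k"
  using PPr by (simp add: poisson_process_def)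

lemma cnt_indep: "A ` (I::nat set) \<subseteq> sets borel \<Longrightarrow> disjoint_family_on A I \<Longrightarrow>
   indep_vars (\<lambda>_. count_space UNIV) (\<lambda>i \<omega>. count_in (A i) (N \<omega>)) I"
  using PPr by (simp add: poisson_process_def)

lemma n_pos: "real n > 0" using n_ge by simp

lemma sqi_f: "sqi f" using f_L1 f_L2 by (auto simp: sqi_def)

lemma measure_nu: "A \<in> sets borel \<Longrightarrow> measure \<nu> A = real n * (LINT x|lborel. indicator A x * f x)"
proof -
  assume A: "A \<in> sets borel"
  have int: "integrable lborel (\<lambda>x. indicator A x * (real n * f x))"
    using integrable_mult_indicator[OF _ integrable_mult_right[OF f_L1, of "real n"], of A] A by simp
  have fm: "(\<lambda>x. ennreal (real n * f x)) \<in> borel_measurable lborel"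
    using borel_measurable_integrable[OF f_L1] by measurable
  have "emeasure \<nu> A = (\<integral>\<^sup>+x. ennreal (real n * f x) * indicator A x \<partial>lborel)"
    using A fm by (simp add: emeasure_density)
  also have "\<dots> = (\<integral>\<^sup>+x. ennreal (indicator A x * (real n * f x)) \<partial>lborel)"
    by (intro nn_integral_cong) (auto simp: indicator_def)
  also have "\<dots> = ennreal (LINT x|lborel. indicator A x * (real n * f x))"
    using int f_nonneg by (intro nn_integral_eq_integral) auto
  finally have "measure \<nu> A = (LINT x|lborel. indicator A x * (real n * f x))"
    using f_nonneg by (simp add: measure_def integral_nonneg_AE)
  also have "\<dots> = real n * (LINT x|lborel. indicator A x * f x)"
    by (simp add: mult.left_commute)
  finally show ?thesis .
qed

lemma beta_nu: "beta f l = amp l / real n * (measure \<nu> (PP l) - measure \<nu> (QQ l))"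
proof -
  have i1: "integrable lborel (\<lambda>x. indicator (PP l) x * f x)"
    using integrable_mult_indicator[OF _ f_L1, of "PP l"] by (simp add: PP_def)
  have i2: "integrable lborel (\<lambda>x. indicator (QQ l) x * f x)"
    using integrable_mult_indicator[OF _ f_L1, of "QQ l"] by (simp add: QQ_def)
  have "beta f l = (LINT x|lborel. amp l * (indicator (PP l) x * f x - indicator (QQ l) x * f x))"
    unfolding beta_def by (intro Bochner_Integration.integral_cong refl) (simp add: varphi_eq left_diff_distrib)
  also have "\<dots> = amp l * ((LINT x|lborel. indicator (PP l) x * f x) - (LINT x|lborel. indicator (QQ l) x * f x))"
    using i1 i2 by simp
  moreover have m1: "measure \<nu> (PP l) = real n * (LINT x|lborel. indicator (PP l) x * f x)"
    by (rule measure_nu) (simp add: PP_def)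
  moreover have m2: "measure \<nu> (QQ l) = real n * (LINT x|lborel. indicator (QQ l) x * f x)"
    by (rule measure_nu) (simp add: QQ_def)
  moreover have "amp l / real n * (real n * a - real n * b) = amp l * (a - b)" for a b
    using n_pos by (simp add: right_diff_distrib[symmetric])
  ultimately show ?thesis by simp
qed

lemma PP_borel: "PP l \<in> sets borel" by (simp add: PP_def)
lemma QQ_borel: "QQ l \<in> sets borel" by (simp add: QQ_def)

lemma ZP_meas: "(\<lambda>\<omega>. count_in (PP l) (N \<omega>)) \<in> M \<rightarrow>\<^sub>M count_space UNIV"
  by (rule cnt_meas[OF PP_borel])
lemma ZQ_meas: "(\<lambda>\<omega>. count_in (QQ l) (N \<omega>)) \<in> M \<rightarrow>\<^sub>M count_space UNIV"
  by (rule cnt_meas[OF QQ_borel])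

lemma sets_by_counts:
  assumes "\<And>X. Q X \<longleftrightarrow> R (count_in (PP l) X) (count_in (QQ l) X)"
  shows "{\<omega>\<in>space M. Q (N \<omega>)} \<in> sets M"
proof -
  have "{\<omega>\<in>space M. Q (N \<omega>)} = {\<omega>\<in>space M. R (count_in (PP l) (N \<omega>)) (count_in (QQ l) (N \<omega>))}"
    using assms by auto
  also have "\<dots> \<in> sets M" by (rule sets_two_counts[OF ZP_meas ZQ_meas])
  finally show ?thesis .
qed

lemma sets_kept: "{\<omega>\<in>space M. kept g n (N \<omega>) l} \<in> sets M"
  by (rule sets_by_counts[where R="\<lambda>a b. amp l / real n * Eb (g * ln (real n)) (real a + real b)
        \<le> \<bar>amp l / real n * (real a - real b)\<bar>"]) (simp add: kept_def beta_hat_eq eta_eq)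

lemma sets_B: "{\<omega>\<in>space M. eta g n (N \<omega>) l \<le> \<bar>beta f l\<bar> + eta g' n (N \<omega>) l} \<in> sets M"
  by (rule sets_by_counts[where R="\<lambda>a b. amp l / real n * Eb (g * ln (real n)) (real a + real b)
        \<le> \<bar>beta f l\<bar> + amp l / real n * Eb (g' * ln (real n)) (real a + real b)"]) (simp add: eta_eq)

lemma sets_D: "{\<omega>\<in>space M. eta g n (N \<omega>) l \<le> \<bar>beta_hat n (N \<omega>) l - beta f l\<bar>} \<in> sets M"
  by (rule sets_by_counts[where R="\<lambda>a b. amp l / real n * Eb (g * ln (real n)) (real a + real b)
        \<le> \<bar>amp l / real n * (real a - real b) - beta f l\<bar>"]) (simp add: eta_eq beta_hat_eq)

lemma x_nonneg: "\<gamma>min * ln (real n) \<ge> 0"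
  using gam n_ge by simp

lemma prob_D: "measure M {\<omega>\<in>space M. eta \<gamma>min n (N \<omega>) l \<le> \<bar>beta_hat n (N \<omega>) l - beta f l\<bar>}
   \<le> 3 * real n powr (- \<gamma>min)"
proof -
  define A where "A i = (if i = (0::nat) then PP l else QQ l)" for i
  define Z where "Z i \<omega> = count_in (A i) (N \<omega>)" for i \<omega>
  define \<mu> where "\<mu> i = measure \<nu> (A i)" for i
  define x where "x = \<gamma>min * ln (real n)"
  define c where "c = amp l / real n"
  have c: "c > 0" using amp_pos[of l] n_pos by (simp add: c_def)
  have Ab: "A i \<in> sets borel" for i by (simp add: A_def PP_borel QQ_borel)
  have Zm: "\<And>i. Z i \<in> M \<rightarrow>\<^sub>M count_space UNIV" unfolding Z_def by (rule cnt_meas[OF Ab])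
  have ind: "indep_vars (\<lambda>_. count_space UNIV) Z {0,1}"
    unfolding Z_def
  proof (rule cnt_indep)
    show "A ` {0, 1} \<subseteq> sets borel" using Ab by auto
    show "disjoint_family_on A {0, 1}"
      using PQ_disj[of l] by (auto simp: disjoint_family_on_def A_def)
  qed
  have dist: "\<And>i k. measure M {\<omega>\<in>space M. Z i \<omega> = k} = exp (- \<mu> i) * \<mu> i ^ k / fact k"
    unfolding Z_def \<mu>_def by (rule cnt_dist[OF Ab])
  have mu: "\<And>i. \<mu> i \<ge> 0" by (simp add: \<mu>_def)
  have bd: "measure M {\<omega>\<in>space M.
     sqrt (2 * x * ((real (Z 0 \<omega>) + real (Z 1 \<omega>)) + sqrt (2 * x * (real (Z 0 \<omega>) + real (Z 1 \<omega>))) + 3 * x)) + x / 3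
       \<le> \<bar>(real (Z 0 \<omega>) - real (Z 1 \<omega>)) - (\<mu> 0 - \<mu> 1)\<bar>} \<le> 3 * exp (- x)"
    by (rule dev_bound[OF P Zm ind dist mu x_nonneg[folded x_def]])
  have beq: "beta f l = c * (\<mu> 0 - \<mu> 1)" by (simp add: beta_nu c_def \<mu>_def A_def)
  have seteq: "{\<omega>\<in>space M. eta \<gamma>min n (N \<omega>) l \<le> \<bar>beta_hat n (N \<omega>) l - beta f l\<bar>}
    = {\<omega>\<in>space M.
     sqrt (2 * x * ((real (Z 0 \<omega>) + real (Z 1 \<omega>)) + sqrt (2 * x * (real (Z 0 \<omega>) + real (Z 1 \<omega>))) + 3 * x)) + x / 3
       \<le> \<bar>(real (Z 0 \<omega>) - real (Z 1 \<omega>)) - (\<mu> 0 - \<mu> 1)\<bar>}"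
  proof (intro Collect_cong conj_cong refl)
    fix \<omega>
    have e1: "eta \<gamma>min n (N \<omega>) l = c * (sqrt (2 * x * ((real (Z 0 \<omega>) + real (Z 1 \<omega>)) + sqrt (2 * x * (real (Z 0 \<omega>) + real (Z 1 \<omega>))) + 3 * x)) + x / 3)"
      by (simp add: eta_eq Eb_def c_def x_def Z_def A_def)
    have e2: "beta_hat n (N \<omega>) l - beta f l = c * ((real (Z 0 \<omega>) - real (Z 1 \<omega>)) - (\<mu> 0 - \<mu> 1))"
      by (simp add: beta_hat_eq beq c_def Z_def A_def right_diff_distrib)
    show "(eta \<gamma>min n (N \<omega>) l \<le> \<bar>beta_hat n (N \<omega>) l - beta f l\<bar>) =
      (sqrt (2 * x * ((real (Z 0 \<omega>) + real (Z 1 \<omega>)) + sqrt (2 * x * (real (Z 0 \<omega>) + real (Z 1 \<omega>))) + 3 * x)) + x / 3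
       \<le> \<bar>(real (Z 0 \<omega>) - real (Z 1 \<omega>)) - (\<mu> 0 - \<mu> 1)\<bar>)"
      unfolding e1 e2 abs_mult using c by simp
  qed
  have "exp (- x) = real n powr (- \<gamma>min)" using n_pos by (simp add: powr_def x_def)
  then show ?thesis using bd seteq by simp
qed

lemma prob_kept:
  "measure M {\<omega>\<in>space M. kept \<gamma> n (N \<omega>) l}
    \<le> 3 * real n powr (- \<gamma>min) + measure M {\<omega>\<in>space M. eta \<gamma> n (N \<omega>) l \<le> \<bar>beta f l\<bar> + eta \<gamma>min n (N \<omega>) l}"
proof -
  let ?K = "{\<omega>\<in>space M. kept \<gamma> n (N \<omega>) l}"
  let ?D = "{\<omega>\<in>space M. eta \<gamma>min n (N \<omega>) l \<le> \<bar>beta_hat n (N \<omega>) l - beta f l\<bar>}"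
  let ?B = "{\<omega>\<in>space M. eta \<gamma> n (N \<omega>) l \<le> \<bar>beta f l\<bar> + eta \<gamma>min n (N \<omega>) l}"
  have sub: "?K \<subseteq> ?D \<union> ?B"
  proof
    fix \<omega> assume "\<omega> \<in> ?K"
    then have sp: "\<omega> \<in> space M" and k: "eta \<gamma> n (N \<omega>) l \<le> \<bar>beta_hat n (N \<omega>) l\<bar>" by (auto simp: kept_def)
    have "\<bar>beta_hat n (N \<omega>) l\<bar> \<le> \<bar>beta f l\<bar> + \<bar>beta_hat n (N \<omega>) l - beta f l\<bar>" by linarith
    then show "\<omega> \<in> ?D \<union> ?B" using sp k by auto
  qed
  have "measure M ?K \<le> measure M (?D \<union> ?B)"
    using sub sets_D sets_B by (intro finite_measure_mono) auto
  also have "\<dots> \<le> measure M ?D + measure M ?B"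
    using sets_D sets_B by (intro measure_Un_le) auto
  also have "\<dots> \<le> 3 * real n powr (- \<gamma>min) + measure M ?B"
    using prob_D by simp
  finally show ?thesis .
qed

lemma cc_meas: "(\<lambda>\<omega>. cc g n (N \<omega>) l) \<in> borel_measurable M"
proof -
  have "(\<lambda>\<omega>. cc g n (N \<omega>) l) = (\<lambda>\<omega>. Ccount g n l (count_in (PP l) (N \<omega>)) (count_in (QQ l) (N \<omega>)))"
    by (simp add: cc_count)
  also have "\<dots> \<in> borel_measurable M" by (rule meas_two_counts[OF ZP_meas ZQ_meas])
  finally show ?thesis .
qed

definition Tm :: "nat \<Rightarrow> (int \<times> int) set" where
  "Tm m = {l \<in> Gamma_n n. \<bar>snd l\<bar> \<le> int m}"

lemma Tm_finite: "finite (Tm m)"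
proof (rule finite_subset)
  show "Tm m \<subseteq> {-1..j0 n} \<times> {- int m..int m}"
    using Gamma_fst by (fastforce simp: Tm_def)
qed simp

lemma Tm_Gamma: "Tm m \<subseteq> Gamma_n n" by (auto simp: Tm_def)

lemma supp_in_Tm: "\<exists>m0. \<forall>m\<ge>m0. supp n X \<subseteq> Tm m"
proof -
  define m0 where "m0 = nat (Max (insert 0 ((\<lambda>l. \<bar>snd l\<bar>) ` supp n X)))"
  have "supp n X \<subseteq> Tm m" if "m \<ge> m0" for m
  proof
    fix l assume l: "l \<in> supp n X"
    have "\<bar>snd l\<bar> \<le> Max (insert 0 ((\<lambda>l. \<bar>snd l\<bar>) ` supp n X))"
      using l supp_finite by (intro Max_ge) auto
    also have "\<dots> \<le> int m0" by (simp add: m0_def)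
    also have "\<dots> \<le> int m" using that by simp
    finally show "l \<in> Tm m" using l supp_Gamma by (auto simp: Tm_def)
  qed
  then show ?thesis by blast
qed

definition Y :: "'a \<Rightarrow> real" where "Y \<omega> = Yf n \<gamma> f (N \<omega>)"

lemma Y_meas: "Y \<in> borel_measurable M"
proof (rule borel_measurable_LIMSEQ_real)
  define G where "G m \<omega> = (\<Sum>l\<in>Tm m. (cc \<gamma> n (N \<omega>) l)\<^sup>2 - 2 * (cc \<gamma> n (N \<omega>) l * beta f l)) + ip f f" for m \<omega>
  show "\<And>m. G m \<in> borel_measurable M"
    unfolding G_def using cc_meas by measurable
  fix \<omega> assume "\<omega> \<in> space M"
  obtain m0 where m0: "\<forall>m\<ge>m0. supp n (N \<omega>) \<subseteq> Tm m" using supp_in_Tm by blast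
  have "eventually (\<lambda>m. G m \<omega> = Y \<omega>) sequentially"
    unfolding eventually_sequentially
  proof (intro exI[of _ m0] allI impI)
    fix m assume "m \<ge> m0"
    then show "G m \<omega> = Y \<omega>"
      unfolding G_def Y_def using Yf_formula[OF sqi_f Tm_finite m0[rule_format] Tm_Gamma] by simp
  qed
  then show "(\<lambda>m. G m \<omega>) \<longlonglongrightarrow> Y \<omega>" by (rule tendsto_eventually)
qed

lemma Y_nonneg: "Y \<omega> \<ge> 0" by (simp add: Y_def Yf_nonneg)

lemma size_meas: "(\<lambda>\<omega>. size (N \<omega>)) \<in> M \<rightarrow>\<^sub>M count_space UNIV"
  using cnt_meas[of UNIV] by (simp add: count_UNIV)

lemma exp_size_int: "integrable M (\<lambda>\<omega>. exp (3 * real (size (N \<omega>))))"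
proof (rule integrableI_bounded)
  show "(\<lambda>\<omega>. exp (3 * real (size (N \<omega>)))) \<in> borel_measurable M"
    using size_meas by (intro measurable_compose[OF _ borel_measurable_exp] borel_measurable_times) (auto intro: measurable_compose)
  have "(\<integral>\<^sup>+\<omega>. ennreal (norm (exp (3 * real (size (N \<omega>))))) \<partial>M)
      = (\<integral>\<^sup>+\<omega>. ennreal (exp (3 * real (count_in UNIV (N \<omega>)))) \<partial>M)"
    by (simp add: count_UNIV)
  also have "\<dots> = ennreal (exp (measure \<nu> UNIV * (exp 3 - 1)))"
    by (rule poisson_mgf[OF P cnt_meas[of UNIV] cnt_dist]) simp_all
  finally show "(\<integral>\<^sup>+\<omega>. ennreal (norm (exp (3 * real (size (N \<omega>))))) \<partial>M) < \<infinity>" by simp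
qed

lemma Y_int: "integrable M Y"
proof -
  define C1 where "C1 = 2 * (real (2 * nat (j0 n + 2)) * (Amax n / real n)\<^sup>2)"
  have C1: "C1 \<ge> 0" by (simp add: C1_def)
  have ub: "Y \<omega> \<le> C1 * exp (3 * real (size (N \<omega>))) + 2 * ip f f" for \<omega>
  proof -
    have "Y \<omega> \<le> 2 * (real (size (N \<omega>)) * (2 * nat (j0 n + 2)) * (Amax n / real n * real (size (N \<omega>)))\<^sup>2) + 2 * ip f f"
      unfolding Y_def by (rule Yf_upper[OF sqi_f])
    also have "2 * (real (size (N \<omega>)) * (2 * nat (j0 n + 2)) * (Amax n / real n * real (size (N \<omega>)))\<^sup>2)
        = C1 * (real (size (N \<omega>)))^3"
      by (simp add: C1_def power2_eq_square power3_eq_cube)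
    also have "\<dots> \<le> C1 * exp (3 * real (size (N \<omega>)))"
      using C1 real_cube_le_exp by (intro mult_left_mono) auto
    finally show ?thesis by simp
  qed
  show ?thesis
  proof (rule Bochner_Integration.integrable_bound)
    show "integrable M (\<lambda>\<omega>. C1 * exp (3 * real (size (N \<omega>))) + 2 * ip f f)"
      using exp_size_int by simp
    show "Y \<in> borel_measurable M" by (rule Y_meas)
    show "AE \<omega> in M. norm (Y \<omega>) \<le> norm (C1 * exp (3 * real (size (N \<omega>))) + 2 * ip f f)"
    proof (rule AE_I2)
      fix \<omega>
      have "0 \<le> Y \<omega>" by (rule Y_nonneg)
      then show "norm (Y \<omega>) \<le> norm (C1 * exp (3 * real (size (N \<omega>))) + 2 * ip f f)"
        using ub[of \<omega>] by simp
    qed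
  qed
qed

lemma E_lower:
  assumes F: "finite F" "F \<subseteq> Gamma_n n"
  shows "(\<Sum>l\<in>F. (beta f l)\<^sup>2 * measure M {\<omega>\<in>space M. \<not> kept \<gamma> n (N \<omega>) l}) \<le> expectation Y"
proof -
  define NK where "NK l = {\<omega>\<in>space M. \<not> kept \<gamma> n (N \<omega>) l}" for l
  have NKs: "NK l \<in> sets M" for l
  proof -
    have "NK l = space M - {\<omega>\<in>space M. kept \<gamma> n (N \<omega>) l}" by (auto simp: NK_def)
    then show ?thesis using sets_kept by auto
  qed
  have ii: "integrable M (\<lambda>\<omega>. (beta f l)\<^sup>2 * indicator (NK l) \<omega>)" for l
    using NKs[of l] by (intro integrable_mult_right) (simp add: integrable_indicator_iff emeasure_eq_measure)
  have "(\<Sum>l\<in>F. (beta f l)\<^sup>2 * measure M (NK l)) = (LINT \<omega>|M. (\<Sum>l\<in>F. (beta f l)\<^sup>2 * indicator (NK l) \<omega>))"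
    using NKs ii by (simp add: Bochner_Integration.integral_sum[where f="\<lambda>l \<omega>. (beta f l)\<^sup>2 * indicator (NK l) \<omega>"])
  also have "\<dots> \<le> expectation Y"
  proof (rule integral_mono)
    show "integrable M (\<lambda>\<omega>. \<Sum>l\<in>F. (beta f l)\<^sup>2 * indicator (NK l) \<omega>)" using ii by simp
    show "integrable M Y" by (rule Y_int)
    fix \<omega> assume \<omega>: "\<omega> \<in> space M"
    have "(\<Sum>l\<in>F. (beta f l)\<^sup>2 * indicator (NK l) \<omega>) = (\<Sum>l\<in>F. (beta f l)\<^sup>2 * (if kept \<gamma> n (N \<omega>) l then 0 else 1))"
      using \<omega> by (intro sum.cong refl) (auto simp: NK_def indicator_def)
    also have "\<dots> \<le> Y \<omega>" unfolding Y_def by (rule Yf_lower[OF sqi_f F])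
    finally show "(\<Sum>l\<in>F. (beta f l)\<^sup>2 * indicator (NK l) \<omega>) \<le> Y \<omega>" .
  qed
  finally show ?thesis by (simp add: NK_def)
qed

lemma main:
  fixes u :: "nat \<Rightarrow> real"
  shows "expectation (\<lambda>\<omega>. LINT x|lborel. (f_tilde_H n \<gamma> (N \<omega>) x - f x)\<^sup>2)
         \<ge> (\<Sum>\<^sub>\<infinity>l \<in> {l \<in> Gamma_n n.
               measure M {\<omega> \<in> space M. eta \<gamma> n (N \<omega>) l \<le> \<bar>beta f l\<bar> + eta \<gamma>min n (N \<omega>) l}
                 \<le> u n}. (beta f l)\<^sup>2)
           * (1 - (3 * real n powr (- \<gamma>min) + u n))"
proof -
  define L where "L = {l \<in> Gamma_n n.
               measure M {\<omega> \<in> space M. eta \<gamma> n (N \<omega>) l \<le> \<bar>beta f l\<bar> + eta \<gamma>min n (N \<omega>) l} \<le> u n}"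
  define \<rho> where "\<rho> = 1 - (3 * real n powr (- \<gamma>min) + u n)"
  have EY: "expectation (\<lambda>\<omega>. LINT x|lborel. (f_tilde_H n \<gamma> (N \<omega>) x - f x)\<^sup>2) = expectation Y"
    by (simp add: Y_def[abs_def] Yf_def)
  have EY0: "expectation Y \<ge> 0" by (rule integral_nonneg_AE) (simp add: Y_nonneg)
  have S0: "infsum (\<lambda>l. (beta f l)\<^sup>2) L \<ge> 0" by (rule infsum_nonneg) simp
  have NKb: "measure M {\<omega>\<in>space M. \<not> kept \<gamma> n (N \<omega>) l} \<ge> \<rho>" if l: "l \<in> L" for l
  proof -
    have "{\<omega>\<in>space M. \<not> kept \<gamma> n (N \<omega>) l} = space M - {\<omega>\<in>space M. kept \<gamma> n (N \<omega>) l}" by auto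
    then have "measure M {\<omega>\<in>space M. \<not> kept \<gamma> n (N \<omega>) l} = 1 - measure M {\<omega>\<in>space M. kept \<gamma> n (N \<omega>) l}"
      using prob_compl[OF sets_kept] by simp
    moreover have "measure M {\<omega>\<in>space M. eta \<gamma> n (N \<omega>) l \<le> \<bar>beta f l\<bar> + eta \<gamma>min n (N \<omega>) l} \<le> u n"
      using l by (simp add: L_def)
    ultimately show ?thesis using prob_kept[of l] by (simp add: \<rho>_def)
  qed
  have "infsum (\<lambda>l. (beta f l)\<^sup>2) L * \<rho> \<le> expectation Y"
  proof (cases "\<rho> > 0")
    case False
    then have "infsum (\<lambda>l. (beta f l)\<^sup>2) L * \<rho> \<le> 0" using S0 by (simp add: mult_nonneg_nonpos)
    then show ?thesis using EY0 by linarith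
  next
    case True
    have "infsum (\<lambda>l. (beta f l)\<^sup>2) L \<le> expectation Y / \<rho>"
    proof (cases "(\<lambda>l. (beta f l)\<^sup>2) summable_on L")
      case True
      show ?thesis
      proof (rule infsum_le_finite_sums[OF True])
        fix F assume F: "finite F" "F \<subseteq> L"
        then have FG: "F \<subseteq> Gamma_n n" by (auto simp: L_def)
        have "(\<Sum>l\<in>F. (beta f l)\<^sup>2) * \<rho> = (\<Sum>l\<in>F. (beta f l)\<^sup>2 * \<rho>)" by (simp add: sum_distrib_right)
        also have "\<dots> \<le> (\<Sum>l\<in>F. (beta f l)\<^sup>2 * measure M {\<omega>\<in>space M. \<not> kept \<gamma> n (N \<omega>) l})"
          using F NKb by (intro sum_mono mult_left_mono) auto
        also have "\<dots> \<le> expectation Y" by (rule E_lower[OF F(1) FG])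
        finally show "(\<Sum>l\<in>F. (beta f l)\<^sup>2) \<le> expectation Y / \<rho>"
          using \<open>\<rho> > 0\<close> by (simp add: pos_le_divide_eq)
      qed
    next
      case False
      then show ?thesis using EY0 \<open>\<rho> > 0\<close> by (simp add: infsum_not_exists)
    qed
    then show ?thesis using True by (simp add: pos_le_divide_eq)
  qed
  then show ?thesis unfolding EY by (simp add: L_def \<rho>_def)
qed

end

theorem lemma2:
  fixes f :: "real \<Rightarrow> real" and n :: nat and M :: "'a measure"
    and N :: "'a \<Rightarrow> real multiset" and \<gamma> \<gamma>min :: real and u :: "nat \<Rightarrow> real"
  assumes f_nonneg: "\<And>x. f x \<ge> 0"
    and f_L1: "integrable lborel f"
    and f_L2: "integrable lborel (\<lambda>x. (f x)\<^sup>2)"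
    and n_ge: "n \<ge> 2"
    and PP: "poisson_process M N (density lborel (\<lambda>x. ennreal (real n * f x)))"
    and gam: "1 < \<gamma>min" "\<gamma>min < \<gamma>"
    and u_pos: "\<And>m. u m > 0"
  shows "prob_space.expectation M
           (\<lambda>\<omega>. LINT x|lborel. (f_tilde_H n \<gamma> (N \<omega>) x - f x)\<^sup>2)
         \<ge> (\<Sum>\<^sub>\<infinity>l \<in> {l \<in> Gamma_n n.
               measure M {\<omega> \<in> space M. eta \<gamma> n (N \<omega>) l \<le> \<bar>beta f l\<bar> + eta \<gamma>min n (N \<omega>) l}
                 \<le> u n}. (beta f l)\<^sup>2)
           * (1 - (3 * real n powr (- \<gamma>min) + u n))"
proof -
  interpret LS f n M N \<gamma> \<gamma>min
    by unfold_locales (use f_nonneg f_L1 f_L2 n_ge PP gam in auto)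
  show ?thesis by (rule main)
qed

end
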